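(* For every integer $s\geq 1$ there exist constants $Q_s \geq 1$ and $C_s \geq 1$ such that the following holds. Let $\phi : \mathbb{R} \to \mathbb{R}/\mathbb{Z}$ be a polynomial phase of degree $s$, let $N \geq 1$, and suppose that $\operatorname{diam}_{[N]}(\phi) \leq \frac{1}{10}$. Then there is an integer $1 \leq q \leq Q_s$ such that $\|q\phi\|_{C^\infty[N]} \leq C_s$.
   Context: $[N] := \{1,\dots,N\}$. A polynomial phase of degree $s$ is a map $\phi(x) = \sum_{j=0}^{s} \alpha_j x^j \bmod 1$ with real coefficients. $\operatorname{diam}_S(\phi) := \sup_{s_1,s_2\in S}\|\phi(s_1)-\phi(s_2)\|_{\mathbb{R}/\mathbb{Z}}$, where $\|\cdot\|_{\mathbb{R}/\mathbb{Z}}$ is the distance to the nearest integer. Smoothness norm: writing a polynomial phase as $p(n) = \beta_0 + \beta_1\binom{n}{1} + \cdots + \beta_s\binom{n}{s} \bmod 1$, one sets $\|p\|_{C^\infty[N]} := \sup_{1 \leq j \leq s} N^j \|\beta_j\|_{\mathbb{R}/\mathbb{Z}}$. *)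

theory Defs
  imports Complex_Main
begin

definition nint_dist :: "real \<Rightarrow> real" where
  "nint_dist x = \<bar>x - of_int (round x)\<bar>"

text \<open>The real polynomial sum_{j=0}^s a_j x^j; the phase is this value taken mod 1.\<close>
definition poly_phase :: "nat \<Rightarrow> (nat \<Rightarrow> real) \<Rightarrow> real \<Rightarrow> real" where
  "poly_phase s a x = (\<Sum>j\<le>s. a j * x ^ j)"

definition diam_on :: "real set \<Rightarrow> (real \<Rightarrow> real) \<Rightarrow> real" where
  "diam_on S f = (SUP p\<in>S \<times> S. nint_dist (f (fst p) - f (snd p)))"

definition int_range :: "nat \<Rightarrow> real set" where
  "int_range N = real ` {1..N}"

text \<open>The coefficients b are uniquely determined.\<close>
definition binom_coeffs :: "nat \<Rightarrow> (nat \<Rightarrow> real) \<Rightarrow> nat \<Rightarrow> real" where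
  "binom_coeffs s a = (THE b. (\<forall>j>s. b j = 0) \<and>
      (\<forall>x::real. poly_phase s a x = (\<Sum>j\<le>s. b j * (x gchoose j))))"

definition smooth_norm :: "nat \<Rightarrow> nat \<Rightarrow> (nat \<Rightarrow> real) \<Rightarrow> real" where
  "smooth_norm N s a = (SUP j\<in>{1..s}. real N ^ j * nint_dist (binom_coeffs s a j))"

end

theory Submission
  imports Defs "HOL-Computational_Algebra.Formal_Power_Series" "HOL-Library.FuncSet"
begin


definition F :: "nat \<Rightarrow> (nat \<Rightarrow> real) \<Rightarrow> real \<Rightarrow> real" where
  "F s b x = (\<Sum>j\<le>s. b j * (x gchoose j))"

lemma nd_nonneg: "0 \<le> nint_dist x"
  by (simp add: nint_dist_def)

lemma nd_le_half: "nint_dist x \<le> 1/2"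
  unfolding nint_dist_def using of_int_round_abs_le[of x] by (simp add: abs_minus_commute)

lemma nd_le_int: "nint_dist x \<le> \<bar>x - of_int k\<bar>"
proof (cases "k = round x")
  case True then show ?thesis by (simp add: nint_dist_def)
next
  case False
  then have "1 \<le> \<bar>k - round x\<bar>" by auto
  then have "(1::real) \<le> of_int \<bar>k - round x\<bar>" by simp
  then have "1 \<le> \<bar>of_int k - of_int (round x)::real\<bar>" by simp
  moreover have "\<bar>x - of_int (round x)\<bar> \<le> 1/2"
    using nd_le_half[of x] by (simp add: nint_dist_def)
  ultimately show ?thesis unfolding nint_dist_def by linarith
qed

lemma nd_add: "nint_dist (x + y) \<le> nint_dist x + nint_dist y"
proof -
  have "nint_dist (x + y) \<le> \<bar>x + y - of_int (round x + round y)\<bar>" by (rule nd_le_int)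
  also have "\<dots> \<le> nint_dist x + nint_dist y" unfolding nint_dist_def by simp
  finally show ?thesis .
qed

lemma nd_minus: "nint_dist (- x) = nint_dist x"
proof -
  have "nint_dist (- x) \<le> nint_dist x"
    using nd_le_int[of "-x" "- round x"] by (simp add: nint_dist_def abs_minus_commute)
  moreover have "nint_dist x \<le> nint_dist (-x)"
    using nd_le_int[of "x" "- round (-x)"] by (simp add: nint_dist_def abs_minus_commute)
  ultimately show ?thesis by simp
qed

lemma nd_diff: "nint_dist (x - y) \<le> nint_dist x + nint_dist y"
  using nd_add[of x "-y"] nd_minus[of y] by simp

lemma nd_int_add: "nint_dist (x + of_int k) = nint_dist x"
proof -
  have "nint_dist (x + of_int k) \<le> nint_dist x"
    using nd_le_int[of "x + of_int k" "round x + k"] by (simp add: nint_dist_def)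
  moreover have "nint_dist x \<le> nint_dist (x + of_int k)"
    using nd_le_int[of "x" "round (x + of_int k) - k"] by (simp add: nint_dist_def)
  ultimately show ?thesis by simp
qed

lemma nd_le_abs: "nint_dist x \<le> \<bar>x\<bar>"
  using nd_le_int[of x 0] by simp

lemma nd_mult_nat: "nint_dist (real n * x) \<le> real n * nint_dist x"
proof -
  have "nint_dist (real n * x) \<le> \<bar>real n * x - of_int (int n * round x)\<bar>" by (rule nd_le_int)
  also have "\<dots> = real n * nint_dist x" unfolding nint_dist_def
    by (simp add: abs_mult right_diff_distrib[symmetric])
  finally show ?thesis .
qed

lemma nd_decomp: "\<exists>k::int. x = of_int k + (x - of_int (round x)) \<and> \<bar>x - of_int (round x)\<bar> = nint_dist x"
  by (simp add: nint_dist_def)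

lemma nd_of_int: "nint_dist (of_int k) = 0"
  using nd_int_add[of 0 k] by (simp add: nint_dist_def)

lemma gchoose_nat: "(real k gchoose j) = real (k choose j)"
  by (simp add: binomial_gbinomial)

lemma coeff_unique:
  assumes "\<forall>k\<le>s. (\<Sum>j\<le>s. c j * (real k gchoose j)) = 0"
  shows "\<forall>j\<le>s. c j = 0"
proof -
  have "j \<le> s \<longrightarrow> c j = 0" for j
  proof (induction j rule: less_induct)
    case (less j)
    show ?case
    proof
      assume js: "j \<le> s"
      have "\<forall>i\<in>{..s}. c i * (real j gchoose i) = (if i = j then c j else 0)"
      proof
        fix i assume "i \<in> {..s}"
        show "c i * (real j gchoose i) = (if i = j then c j else 0)"
        proof (cases "i < j")
          case True then show ?thesis using less \<open>i \<in> {..s}\<close> by auto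
        next
          case False
          then show ?thesis by (cases "i = j") (auto simp: gchoose_nat)
        qed
      qed
      then have "(\<Sum>i\<le>s. c i * (real j gchoose i)) = c j"
        using js by (simp add: sum.delta)
      then show "c j = 0" using assms js by simp
    qed
  qed
  then show ?thesis by blast
qed

lemma F_add: "F s (\<lambda>i. b i + c i) x = F s b x + F s c x"
  by (simp add: F_def sum.distrib distrib_right)

lemma F_scale: "F s (\<lambda>i. r * b i) x = r * F s b x"
  by (simp add: F_def sum_distrib_left mult.assoc)

lemma F_diff: "F s (\<lambda>i. b i - c i) x = F s b x - F s c x"
  by (simp add: F_def sum_subtractf left_diff_distrib)

lemma V_sum:
  assumes "finite A" "\<forall>a\<in>A. \<exists>b. \<forall>x. f a x = F s b x"
  shows "\<exists>b. \<forall>x. (\<Sum>a\<in>A. f a x) = F s b x"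
  using assms
proof (induction A rule: finite_induct)
  case empty
  show ?case by (auto intro!: exI[of _ "\<lambda>_. 0"] simp: F_def)
next
  case (insert a A)
  then obtain b where b: "\<forall>x. (\<Sum>a\<in>A. f a x) = F s b x" by auto
  obtain c where c: "\<forall>x. f a x = F s c x" using insert by auto
  show ?case
    by (rule exI[of _ "\<lambda>i. c i + b i"]) (simp add: insert F_add b c)
qed

lemma V_scale: "\<forall>x. f x = F s b x \<Longrightarrow> \<forall>x. r * f x = F s (\<lambda>i. r * b i) x"
  by (simp add: F_scale)

lemma V_basis: "i \<le> s \<Longrightarrow> \<forall>x. (x gchoose i) = F s (\<lambda>k. if k = i then 1 else 0) x"
proof
  fix x assume i: "i \<le> s"
  have "F s (\<lambda>k. if k = i then 1 else 0) x = (\<Sum>j\<le>s. if j = i then (x gchoose j) else 0)"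
    unfolding F_def by (rule sum.cong) auto
  also have "\<dots> = (x gchoose i)" using i by (simp add: sum.delta)
  finally show "(x gchoose i) = F s (\<lambda>k. if k = i then 1 else 0) x" by simp
qed

lemma F_lift: "j \<le> s \<Longrightarrow> F j b x = F s (\<lambda>i. if i \<le> j then b i else 0) x"
proof -
  assume js: "j \<le> s"
  have "F s (\<lambda>i. if i \<le> j then b i else 0) x = (\<Sum>i\<le>s. if i \<le> j then b i * (x gchoose i) else 0)"
    unfolding F_def by (rule sum.cong) auto
  also have "\<dots> = (\<Sum>i\<in>{i\<in>{..s}. i \<le> j}. b i * (x gchoose i))"
    by (rule sum.inter_filter[symmetric]) simp
  also have "{i\<in>{..s}. i \<le> j} = {..j}" using js by auto
  finally show ?thesis by (simp add: F_def)
qed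

lemma monom_repr: "\<exists>b. \<forall>x. x ^ j = F j b x"
proof (induction j)
  case 0
  show ?case by (rule exI[of _ "\<lambda>_. 1"]) (simp add: F_def)
next
  case (Suc j)
  then obtain b where b: "\<forall>x. x ^ j = F j b x" by auto
  have eq: "x ^ Suc j = (\<Sum>i\<le>j. b i * (x * (x gchoose i)))" for x
    using b by (simp add: F_def sum_distrib_left algebra_simps)
  have "\<forall>i\<in>{..j}. \<exists>c. \<forall>x. b i * (x * (x gchoose i)) = F (Suc j) c x"
  proof
    fix i assume i: "i \<in> {..j}"
    obtain c1 where c1: "\<forall>x. (x gchoose i) = F (Suc j) c1 x" using V_basis[of i "Suc j"] i by auto
    obtain c2 where c2: "\<forall>x. (x gchoose Suc i) = F (Suc j) c2 x" using V_basis[of "Suc i" "Suc j"] i by auto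
    have "\<forall>x. b i * (x * (x gchoose i)) = F (Suc j) (\<lambda>k. b i * (real i * c1 k + real (Suc i) * c2 k)) x"
    proof
      fix x
      have "b i * (x * (x gchoose i)) = b i * (real i * (x gchoose i) + real (Suc i) * (x gchoose Suc i))"
        by (simp add: gbinomial_mult_1)
      also have "\<dots> = b i * (real i * F (Suc j) c1 x + real (Suc i) * F (Suc j) c2 x)"
        using c1 c2 by simp
      also have "\<dots> = F (Suc j) (\<lambda>k. b i * (real i * c1 k + real (Suc i) * c2 k)) x"
        by (simp only: F_scale F_add)
      finally show "b i * (x * (x gchoose i)) = F (Suc j) (\<lambda>k. b i * (real i * c1 k + real (Suc i) * c2 k)) x" .
    qed
    then show "\<exists>c. \<forall>x. b i * (x * (x gchoose i)) = F (Suc j) c x" by blast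
  qed
  then obtain c where "\<forall>x. (\<Sum>i\<le>j. b i * (x * (x gchoose i))) = F (Suc j) c x"
    using V_sum[of "{..j}" "\<lambda>i x. b i * (x * (x gchoose i))" "Suc j"] by blast
  then show ?case using eq by auto
qed

lemma repr_exists: "\<exists>b. (\<forall>j>s. b j = 0) \<and> (\<forall>x. poly_phase s a x = F s b x)"
proof -
  have "\<forall>j\<in>{..s}. \<exists>c. \<forall>x. a j * x ^ j = F s c x"
  proof
    fix j assume j: "j \<in> {..s}"
    obtain b where "\<forall>x. x ^ j = F j b x" using monom_repr by blast
    then have "\<forall>x. x ^ j = F s (\<lambda>i. if i \<le> j then b i else 0) x" using F_lift j by auto
    then show "\<exists>c. \<forall>x. a j * x ^ j = F s c x" using V_scale[of "\<lambda>x. x^j" s _ "a j"] by blast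
  qed
  then obtain c where c: "\<forall>x. poly_phase s a x = F s c x"
    using V_sum[of "{..s}" "\<lambda>j x. a j * x ^ j" s] unfolding poly_phase_def by blast
  have "F s c x = F s (\<lambda>i. if i \<le> s then c i else 0) x" for x
    using F_lift[of s s c] by simp
  then show ?thesis using c by (intro exI[of _ "\<lambda>i. if i \<le> s then c i else 0"]) auto
qed

lemma binom_coeffs_eq:
  assumes "\<forall>j>s. b j = 0" "\<forall>x. poly_phase s a x = F s b x"
  shows "binom_coeffs s a = b"
  unfolding binom_coeffs_def
proof (rule the_equality)
  show "(\<forall>j>s. b j = 0) \<and> (\<forall>x. poly_phase s a x = (\<Sum>j\<le>s. b j * (x gchoose j)))"
    using assms by (simp add: F_def)
next
  fix b' assume b': "(\<forall>j>s. b' j = 0) \<and> (\<forall>x. poly_phase s a x = (\<Sum>j\<le>s. b' j * (x gchoose j)))"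
  have "\<forall>k\<le>s. (\<Sum>j\<le>s. (b' j - b j) * (real k gchoose j)) = 0"
    using b' assms by (auto simp: F_def sum_subtractf left_diff_distrib)
  then have "\<forall>j\<le>s. b' j - b j = 0" by (rule coeff_unique)
  then show "b' = b" using b' assms by (metis eq_iff_diff_eq_0 not_le ext)
qed

lemma binom_coeffs_F: "\<forall>x. poly_phase s a x = F s (binom_coeffs s a) x"
  using repr_exists[of s a] binom_coeffs_eq by metis

lemma binom_coeffs_scale: "binom_coeffs s (\<lambda>j. r * a j) = (\<lambda>j. r * binom_coeffs s a j)"
proof -
  obtain b where b: "\<forall>j>s. b j = 0" "\<forall>x. poly_phase s a x = F s b x" using repr_exists by blast
  have "\<forall>x. poly_phase s (\<lambda>j. r * a j) x = F s (\<lambda>j. r * b j) x"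
  proof
    fix x
    have "F s (\<lambda>j. r * b j) x = r * poly_phase s a x" using b(2) F_scale by simp
    then show "poly_phase s (\<lambda>j. r * a j) x = F s (\<lambda>j. r * b j) x"
      by (simp add: poly_phase_def sum_distrib_left mult.assoc)
  qed
  then have "binom_coeffs s (\<lambda>j. r * a j) = (\<lambda>j. r * b j)" using b by (intro binom_coeffs_eq) auto
  moreover have "binom_coeffs s a = b" using b by (rule binom_coeffs_eq)
  ultimately show ?thesis by simp
qed




definition ee :: "real \<Rightarrow> complex" where "ee x = cis (2 * pi * x)"

lemma ee_add: "ee (x + y) = ee x * ee y"
  by (simp add: ee_def cis_mult distrib_left)

lemma ee_norm [simp]: "norm (ee x) = 1"
  by (simp add: ee_def)

lemma ee_zero [simp]: "ee 0 = 1"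
  by (simp add: ee_def)

lemma ee_cnj: "cnj (ee x) = ee (- x)"
  by (simp add: ee_def complex_eq_iff)

lemma ee_int: "ee (of_int k) = 1"
  unfolding ee_def by (rule cis_multiple_2pi) simp

lemma ee_int_add: "ee (x + of_int k) = ee x"
  by (simp add: ee_add ee_int)

lemma ee_diff: "ee (x - y) = ee x * cnj (ee y)"
  using ee_add[of x "-y"] by (simp add: ee_cnj)

lemma ee_round: "ee x = ee (x - of_int (round x))"
  using ee_int_add[of "x - of_int (round x)" "round x"] by simp

lemma sin_lower: assumes "0 \<le> z" "z \<le> pi/3" shows "z / 2 \<le> sin z"
proof (cases "z = 0")
  case True then show ?thesis by simp
next
  case False
  then have z0: "0 < z" using assms by simp
  obtain \<xi> where xi: "0 < \<xi>" "\<xi> < z" "sin z - sin 0 = (z - 0) * cos \<xi>"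
    using MVT2[of 0 z sin cos] z0 by (auto intro: DERIV_sin)
  have "cos (pi/3) \<le> cos \<xi>"
    by (rule cos_monotone_0_pi_le) (use xi assms in auto)
  then have "1/2 \<le> cos \<xi>" by (simp add: cos_60)
  then show ?thesis using xi z0 by (simp add: mult_left_mono[of "1/2" "cos \<xi>" z, simplified])
qed

lemma ee_sub1: "nint_dist b \<le> norm (ee b - 1)"
proof -
  define y where "y = b - of_int (round b)"
  have ey: "ee b = ee y" unfolding y_def by (rule ee_round)
  have ny: "nint_dist b = \<bar>y\<bar>" by (simp add: y_def nint_dist_def)
  have yb: "\<bar>y\<bar> \<le> 1/2" using nd_le_half[of b] ny by simp
  have c: "cos (2 * pi * y) = cos (2 * pi * \<bar>y\<bar>)"
    by (cases "y \<ge> 0") (auto simp: abs_if)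
  have sn: "\<bar>sin (2 * pi * y)\<bar> = sin (2 * pi * \<bar>y\<bar>)"
  proof -
    have "0 \<le> sin (2 * pi * \<bar>y\<bar>)" using yb by (intro sin_ge_zero) auto
    then show ?thesis by (cases "y \<ge> 0") (auto simp: abs_if)
  qed
  have re: "Re (ee b - 1) = cos (2 * pi * y) - 1" and im: "Im (ee b - 1) = sin (2*pi*y)"
    using ey by (simp_all add: ee_def)
  show ?thesis
  proof (cases "\<bar>y\<bar> \<le> 1/6")
    case True
    have "2 * pi * \<bar>y\<bar> / 2 \<le> sin (2 * pi * \<bar>y\<bar>)"
      by (rule sin_lower) (use True in auto)
    moreover have "\<bar>y\<bar> \<le> 2 * pi * \<bar>y\<bar> / 2" using pi_ge_two mult_right_mono[of 1 pi "\<bar>y\<bar>"] by simp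
    moreover have "\<bar>Im (ee b - 1)\<bar> \<le> norm (ee b - 1)" by (rule abs_Im_le_cmod)
    ultimately show ?thesis using ny im sn by linarith
  next
    case False
    have "cos (2 * pi * \<bar>y\<bar>) \<le> cos (pi/3)"
      by (rule cos_monotone_0_pi_le) (use False yb in auto)
    then have "cos (2 * pi * y) \<le> 1/2" using c by (simp add: cos_60)
    moreover have "\<bar>Re (ee b - 1)\<bar> \<le> norm (ee b - 1)" by (rule abs_Re_le_cmod)
    ultimately show ?thesis using ny re yb by linarith
  qed
qed

lemma geom_bound:
  "nint_dist b * norm (\<Sum>t\<in>{m..<n::nat}. ee (b * real t)) \<le> 2"
proof (cases "m \<le> n")
  case False then show ?thesis by simp
next
  case True
  have "(ee b - 1) * (\<Sum>t\<in>{m..<n}. ee (b * real t)) = (\<Sum>t\<in>{m..<n}. ee (b * real (Suc t)) - ee (b * real t))"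
    by (simp add: sum_distrib_left algebra_simps ee_add[symmetric])
  also have "\<dots> = ee (b * real n) - ee (b * real m)"
    using True by (rule sum_Suc_diff')
  finally have eq: "(ee b - 1) * (\<Sum>t\<in>{m..<n}. ee (b * real t)) = ee (b * real n) - ee (b * real m)" .
  have "norm (ee (b * real n) - ee (b * real m)) \<le> 2"
    using norm_triangle_ineq4[of "ee (b * real n)" "ee (b * real m)"] by simp
  then have "norm (ee b - 1) * norm (\<Sum>t\<in>{m..<n}. ee (b * real t)) \<le> 2"
    using eq by (metis norm_mult)
  moreover have "nint_dist b * norm (\<Sum>t\<in>{m..<n}. ee (b * real t)) \<le> norm (ee b - 1) * norm (\<Sum>t\<in>{m..<n}. ee (b * real t))"
    using ee_sub1[of b] by (simp add: mult_right_mono)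
  ultimately show ?thesis by linarith
qed




lemma sq_expand:
  fixes f :: "nat \<Rightarrow> real"
  shows "(norm (\<Sum>n\<in>{1..N}. ee (f n)))^2
     \<le> real N + 2 * (\<Sum>h\<in>{1..<N}. norm (\<Sum>m\<in>{1..N-h}. ee (f (m+h) - f m)))"
proof -
  define I where "I = {1..N}"
  define g where "g = (\<lambda>p::nat\<times>nat. ee (f (fst p) - f (snd p)))"
  define S where "S = (\<Sum>n\<in>I. ee (f n))"
  define A where "A = {p\<in>I\<times>I. snd p < fst p}"
  define D where "D = {p\<in>I\<times>I. fst p = snd p}"
  define A' where "A' = {p\<in>I\<times>I. fst p < snd p}"
  have fin: "finite (I\<times>I)" by (simp add: I_def)
  have "S * cnj S = (\<Sum>n\<in>I. \<Sum>m\<in>I. ee (f n) * cnj (ee (f m)))"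
    by (simp add: S_def cnj_sum sum_product)
  also have "\<dots> = (\<Sum>p\<in>I\<times>I. g p)"
    by (simp add: sum.cartesian_product g_def ee_diff split_def)
  also have "\<dots> = (\<Sum>p\<in>I\<times>I. (if snd p < fst p then g p else 0) + (if fst p = snd p then g p else 0)
                     + (if fst p < snd p then g p else 0))"
    by (rule sum.cong) auto
  also have "\<dots> = sum g A + sum g D + sum g A'"
    unfolding A_def D_def A'_def
    by (simp add: sum.distrib sum.inter_filter[OF fin])
  finally have eq1: "S * cnj S = sum g A + sum g D + sum g A'" .
  have "D = (\<lambda>n. (n,n)) ` I" unfolding D_def by auto
  then have "sum g D = (\<Sum>n\<in>I. g (n,n))" by (simp add: sum.reindex inj_on_def)
  also have "\<dots> = of_nat N" by (simp add: g_def I_def)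
  finally have eqD: "sum g D = of_nat N" .
  have "A' = prod.swap ` A" unfolding A_def A'_def by auto
  then have "sum g A' = (\<Sum>p\<in>A. g (prod.swap p))" by (simp add: sum.reindex)
  also have "\<dots> = (\<Sum>p\<in>A. cnj (g p))"
    by (rule sum.cong) (auto simp: g_def ee_cnj)
  also have "\<dots> = cnj (sum g A)" by (simp add: cnj_sum)
  finally have eqA': "sum g A' = cnj (sum g A)" .
  define B where "B = Sigma {1..<N} (\<lambda>h. {1..N-h})"
  have AB: "A = (\<lambda>(h,m). (m+h, m)) ` B"
  proof
    show "A \<subseteq> (\<lambda>(h,m). (m+h, m)) ` B"
    proof
      fix p assume "p \<in> A"
      then obtain n m where p: "p = (n,m)" "m < n" "1 \<le> m" "n \<le> N" unfolding A_def I_def by auto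
      then have "(n - m, m) \<in> B" unfolding B_def by auto
      moreover have "p = (\<lambda>(h,m). (m+h, m)) (n-m, m)" using p by auto
      ultimately show "p \<in> (\<lambda>(h,m). (m+h, m)) ` B" by blast
    qed
  next
    show "(\<lambda>(h,m). (m+h, m)) ` B \<subseteq> A" unfolding A_def B_def I_def by auto
  qed
  have inj: "inj_on (\<lambda>(h,m). (m+h, m)) B" unfolding inj_on_def B_def by auto
  have "sum g A = (\<Sum>p\<in>B. g ((\<lambda>(h,m). (m+h, m)) p))"
    unfolding AB by (rule sum.reindex[OF inj, unfolded comp_def])
  also have "\<dots> = (\<Sum>h\<in>{1..<N}. \<Sum>m\<in>{1..N-h}. ee (f (m+h) - f m))"
    unfolding B_def by (subst sum.Sigma) (auto simp: g_def split_def)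
  finally have eqA: "sum g A = (\<Sum>h\<in>{1..<N}. \<Sum>m\<in>{1..N-h}. ee (f (m+h) - f m))" .
  have "(norm S)^2 = Re (S * cnj S)" by (simp add: complex_mult_cnj cmod_power2)
  also have "\<dots> = real N + 2 * Re (sum g A)" using eq1 eqD eqA' by simp
  also have "\<dots> \<le> real N + 2 * norm (sum g A)" using complex_Re_le_cmod[of "sum g A"] by linarith
  also have "\<dots> \<le> real N + 2 * (\<Sum>h\<in>{1..<N}. norm (\<Sum>m\<in>{1..N-h}. ee (f (m+h) - f m)))"
    unfolding eqA using norm_sum by (auto intro: mult_left_mono)
  finally show ?thesis by (simp add: S_def I_def)
qed




lemma fin_int_ivl: "finite {k::int. (a::real) \<le> of_int k \<and> of_int k \<le> (b::real)}"
proof -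
  have "{k::int. a \<le> of_int k \<and> of_int k \<le> b} = {ceiling a..floor b}"
    by (auto simp: ceiling_le_iff le_floor_iff)
  then show ?thesis by simp
qed

lemma card_int_ivl:
  assumes "a \<le> b"
  shows "real (card {k::int. a \<le> of_int k \<and> of_int k \<le> b}) \<le> b - a + 1"
proof -
  have eq: "{k::int. a \<le> of_int k \<and> of_int k \<le> b} = {ceiling a..floor b}"
    by (auto simp: ceiling_le_iff le_floor_iff)
  have "real (card {ceiling a..floor b}) = real (nat (floor b - ceiling a + 1))" by simp
  also have "\<dots> \<le> b - a + 1"
  proof (cases "floor b - ceiling a + 1 \<ge> 0")
    case True
    then have "real (nat (floor b - ceiling a + 1)) = of_int (floor b) - of_int (ceiling a) + 1" by simp
    also have "\<dots> \<le> b - a + 1" using of_int_floor_le[of b] le_of_int_ceiling[of a] by linarith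
    finally show ?thesis .
  next
    case False then show ?thesis using assms by simp
  qed
  finally show ?thesis using eq by simp
qed

lemma card_nat_ivl:
  assumes "a \<le> b"
  shows "real (card {t::nat. t \<in> T \<and> a \<le> real t \<and> real t \<le> b}) \<le> b - a + 1"
proof -
  have "card {t::nat. t \<in> T \<and> a \<le> real t \<and> real t \<le> b} = card (int ` {t::nat. t \<in> T \<and> a \<le> real t \<and> real t \<le> b})"
    by (simp add: card_image)
  also have "\<dots> \<le> card {k::int. a \<le> of_int k \<and> of_int k \<le> b}"
    by (rule card_mono) (use fin_int_ivl in auto)
  finally show ?thesis using card_int_ivl[OF assms] by linarith
qed



lemma div_eq_diff_lt:
  fixes u v g :: nat
  assumes "u div g = v div g" "u < v" "0 < g"
  shows "v - u < g"
proof -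
  have e1: "v = g * (v div g) + v mod g" by simp
  have e2: "u = g * (v div g) + u mod g" using assms(1) by (metis div_mult_mod_eq mult.commute)
  have "v mod g < g" using assms(3) by simp
  then show ?thesis using e1 e2 by linarith
qed

lemma vino:
  fixes \<alpha> \<eta> \<sigma> :: real and S :: "nat set" and N :: nat
  assumes \<sigma>0: "0 < \<sigma>" and SN: "S \<subseteq> {1..N}" and cardS: "\<sigma> * N \<le> card S"
    and Nbig: "16 / \<sigma>^2 \<le> N" and \<eta>0: "0 \<le> \<eta>" and \<eta>\<sigma>: "\<eta> \<le> \<sigma>^2/32"
    and hS: "\<forall>h\<in>S. nint_dist (\<alpha> * real h) \<le> \<eta>"
  shows "\<exists>q::nat. 1 \<le> q \<and> real q \<le> 2/\<sigma> \<and> nint_dist (real q * \<alpha>) \<le> 32 * \<eta> / (\<sigma>^2 * N)"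
proof -
  have finS: "finite S" using SN finite_subset by blast
  have Npos: "0 < real N" using Nbig \<sigma>0 by (smt (verit) divide_pos_pos zero_less_power)
  have "card S \<le> N" using card_mono[OF _ SN] by simp
  then have \<sigma>1: "\<sigma> \<le> 1" using cardS Npos by (smt (verit) mult_le_cancel_right2 of_nat_le_iff)
  have \<sigma>N: "16 / \<sigma> \<le> \<sigma> * N"
  proof -
    have "16 / \<sigma> = \<sigma> * (16 / \<sigma>^2)" using \<sigma>0 by (simp add: power2_eq_square field_simps)
    also have "\<dots> \<le> \<sigma> * N" by (rule mult_left_mono) (use Nbig \<sigma>0 in auto)
    finally show ?thesis .
  qed
  have "16 \<le> 16 / \<sigma>" using \<sigma>0 \<sigma>1 by (simp add: field_simps)
  then have \<sigma>N16: "16 \<le> \<sigma> * N" using \<sigma>N by linarith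
  define g where "g = nat (ceiling (2/\<sigma>))"
  have g1: "2/\<sigma> \<le> real g" unfolding g_def by linarith
  have gg: "real g = of_int (ceiling (2/\<sigma>))" unfolding g_def using \<sigma>0 by (simp add: order_less_imp_le)
  have g2: "real g < 2/\<sigma> + 1" unfolding gg by linarith
  have g0: "0 < g" using g1 \<sigma>0 by (metis divide_pos_pos of_nat_0_less_iff order_less_le_trans zero_less_numeral)
  define blk where "blk h = (h - 1) div g" for h :: nat
  have "blk ` S \<subseteq> {0..(N-1) div g}"
  proof
    fix z assume "z \<in> blk ` S"
    then obtain h where h: "h \<in> S" "z = blk h" by auto
    then have "h \<le> N" using SN by auto
    then have "h - 1 \<le> N - 1" by simp
    then show "z \<in> {0..(N-1) div g}" using h unfolding blk_def by (simp add: div_le_mono)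
  qed
  then have "card (blk ` S) \<le> card {0..(N-1) div g}" by (intro card_mono) auto
  then have "card (blk ` S) \<le> (N-1) div g + 1" by simp
  moreover have "real ((N-1) div g) \<le> \<sigma> * N / 2"
  proof -
    have "real ((N-1) div g) \<le> real (N-1) / real g" by (rule of_nat_div_le_of_nat)
    also have "\<dots> \<le> real N / real g" using g0 by (simp add: divide_right_mono)
    also have "\<dots> \<le> real N / (2/\<sigma>)" using g1 g0 \<sigma>0 Npos by (intro divide_left_mono) (auto simp: g0)
    also have "\<dots> = \<sigma> * N / 2" by simp
    finally show ?thesis .
  qed
  ultimately have "real (card (blk ` S)) < card S" using cardS \<sigma>N16 by linarith
  then have "\<not> inj_on blk S" using pigeonhole by auto
  then obtain x y where xy: "x \<in> S" "y \<in> S" "x < y" "blk x = blk y"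
    unfolding inj_on_def by (metis linorder_neqE_nat)
  have x1: "1 \<le> x" and yN: "y \<le> N" using xy SN by auto
  have "(y - 1) - (x - 1) < g" using div_eq_diff_lt[of "x-1" g "y-1"] xy g0 x1 unfolding blk_def by auto
  then have ygx: "y - x < g" using x1 xy by simp
  define q where "q = y - x"
  have q1: "1 \<le> q" and qgs: "real q < 2/\<sigma>" using xy ygx g2 unfolding q_def by auto
  then have qg: "real q \<le> 2/\<sigma>" by simp
  have qa: "real q * \<alpha> = \<alpha> * real y - \<alpha> * real x" unfolding q_def using xy by (simp add: of_nat_diff algebra_simps)
  have ndq: "nint_dist (real q * \<alpha>) \<le> 2 * \<eta>"
  proof -
    have "nint_dist (\<alpha> * real y) \<le> \<eta>" "nint_dist (\<alpha> * real x) \<le> \<eta>" using hS xy by auto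
    then show ?thesis using nd_diff[of "\<alpha> * real y" "\<alpha> * real x"] unfolding qa by linarith
  qed
  obtain r where r: "r \<in> {..<q}" "card S \<le> card ((\<lambda>h. h mod q) -` {r} \<inter> S) * card {..<q}"
    using pigeonhole_card[of "\<lambda>h. h mod q" S "{..<q}"] finS q1 by fastforce
  define T where "T = (\<lambda>h. h mod q) -` {r} \<inter> S"
  have cardT: "\<sigma> * N / q \<le> card T"
  proof -
    have "real (card S) \<le> real (card T) * q" using r unfolding T_def by (metis card_lessThan of_nat_le_iff of_nat_mult)
    then show ?thesis using cardS q1 by (simp add: divide_le_eq)
  qed
  define \<beta> where "\<beta> = real q * \<alpha> - of_int (round (real q * \<alpha>))"
  have abs\<beta>: "\<bar>\<beta>\<bar> = nint_dist (real q * \<alpha>)" unfolding \<beta>_def nint_dist_def by simp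
  define \<gamma> where "\<gamma> = \<alpha> * real r"
  define T' where "T' = (\<lambda>h. h div q) ` T"
  have injT: "inj_on (\<lambda>h. h div q) T"
  proof (rule inj_onI)
    fix u v assume "u \<in> T" "v \<in> T" "u div q = v div q"
    then have "u mod q = v mod q" unfolding T_def by auto
    then show "u = v" using \<open>u div q = v div q\<close> by (metis div_mult_mod_eq)
  qed
  have cardT': "card T' = card T" unfolding T'_def by (rule card_image[OF injT])
  have finT': "finite T'" unfolding T'_def T_def using finS by simp
  have T'good: "nint_dist (\<gamma> + real t * \<beta>) \<le> \<eta> \<and> t \<le> N" if tT: "t \<in> T'" for t
  proof -
    obtain h where h: "h \<in> T" "t = h div q" using tT unfolding T'_def by blast
    have hS': "h \<in> S" and hr: "h mod q = r" using h unfolding T_def by auto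
    have "real h = real r + real q * real t" using hr h by (metis div_mult_mod_eq of_nat_add of_nat_mult add.commute mult.commute)
    then have "\<alpha> * real h = (\<gamma> + real t * \<beta>) + of_int (int t * round (real q * \<alpha>))"
      unfolding \<gamma>_def \<beta>_def by (simp add: algebra_simps)
    then have "nint_dist (\<gamma> + real t * \<beta>) = nint_dist (\<alpha> * real h)"
      by (metis nd_int_add)
    moreover have "t \<le> N" using h hS' SN by (metis atLeastAtMost_iff div_le_dividend le_trans subsetD)
    ultimately show ?thesis using hS hS' by simp
  qed
  show ?thesis
  proof (cases "\<beta> = 0")
    case True
    then show ?thesis using q1 qg abs\<beta> \<eta>0 Npos \<sigma>0 by (intro exI[of _ q]) auto
  next
    case False
    define X where "X = \<bar>\<beta>\<bar>"
    have X0: "0 < X" using False unfolding X_def by simp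
    have X2: "X \<le> 2 * \<eta>" using ndq abs\<beta> unfolding X_def by simp
    define k where "k t = round (\<gamma> + real t * \<beta>)" for t :: nat
    define K where "K = k ` T'"
    define Fk where "Fk \<kappa> = {t\<in>T'. \<bar>\<gamma> + real t * \<beta> - of_int \<kappa>\<bar> \<le> \<eta>}" for \<kappa>
    have T'sub: "T' \<subseteq> (\<Union>\<kappa>\<in>K. Fk \<kappa>)"
    proof
      fix t assume t: "t \<in> T'"
      then have "\<bar>\<gamma> + real t * \<beta> - of_int (k t)\<bar> \<le> \<eta>" using T'good unfolding k_def nint_dist_def by auto
      then show "t \<in> (\<Union>\<kappa>\<in>K. Fk \<kappa>)" using t unfolding K_def Fk_def by auto
    qed
    have finK: "finite K" unfolding K_def using finT' by simp
    have "card T' \<le> card (\<Union>\<kappa>\<in>K. Fk \<kappa>)"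
      by (rule card_mono) (use finK finT' T'sub in \<open>auto simp: Fk_def\<close>)
    also have "\<dots> \<le> (\<Sum>\<kappa>\<in>K. card (Fk \<kappa>))" by (rule card_UN_le[OF finK])
    finally have c1: "real (card T') \<le> (\<Sum>\<kappa>\<in>K. real (card (Fk \<kappa>)))" by (metis of_nat_le_iff of_nat_sum)
    have c2: "real (card (Fk \<kappa>)) \<le> 2 * \<eta> / X + 1" for \<kappa>
    proof -
      define c where "c = (of_int \<kappa> - \<gamma>) / \<beta>"
      have "Fk \<kappa> \<subseteq> {t. t \<in> T' \<and> c - \<eta>/X \<le> real t \<and> real t \<le> c + \<eta>/X}"
      proof
        fix t assume "t \<in> Fk \<kappa>"
        then have t: "t \<in> T'" "\<bar>\<gamma> + real t * \<beta> - of_int \<kappa>\<bar> \<le> \<eta>" unfolding Fk_def by auto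
        have "\<gamma> + real t * \<beta> - of_int \<kappa> = \<beta> * (real t - c)" unfolding c_def using False by (simp add: field_simps)
        then have "X * \<bar>real t - c\<bar> \<le> \<eta>" using t unfolding X_def by (simp add: abs_mult)
        then have "\<bar>real t - c\<bar> \<le> \<eta> / X" using X0 by (simp add: field_simps)
        then show "t \<in> {t. t \<in> T' \<and> c - \<eta>/X \<le> real t \<and> real t \<le> c + \<eta>/X}" using t by auto
      qed
      then have "card (Fk \<kappa>) \<le> card {t. t \<in> T' \<and> c - \<eta>/X \<le> real t \<and> real t \<le> c + \<eta>/X}"
        by (rule card_mono[rotated]) (use finT' in auto)
      moreover have "real (card {t. t \<in> T' \<and> c - \<eta>/X \<le> real t \<and> real t \<le> c + \<eta>/X}) \<le> (c + \<eta>/X) - (c - \<eta>/X) + 1"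
        by (rule card_nat_ivl) (use X0 \<eta>0 in auto)
      ultimately show ?thesis by simp
    qed
    have c3: "real (card K) \<le> 2 * real N * X + 2"
    proof -
      have "K \<subseteq> {\<kappa>::int. \<gamma> - N * X - \<eta> \<le> of_int \<kappa> \<and> of_int \<kappa> \<le> \<gamma> + N * X + \<eta>}"
      proof
        fix \<kappa> assume "\<kappa> \<in> K"
        then obtain t where t: "t \<in> T'" "\<kappa> = k t" unfolding K_def by auto
        have "\<bar>\<gamma> + real t * \<beta> - of_int \<kappa>\<bar> \<le> \<eta>" using T'good t unfolding k_def nint_dist_def by auto
        moreover have "\<bar>real t * \<beta>\<bar> \<le> N * X" using T'good[OF t(1)] X0 unfolding X_def
          by (simp add: abs_mult mult_right_mono)
        ultimately show "\<kappa> \<in> {\<kappa>::int. \<gamma> - N * X - \<eta> \<le> of_int \<kappa> \<and> of_int \<kappa> \<le> \<gamma> + N * X + \<eta>}" by auto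
      qed
      then have "card K \<le> card {\<kappa>::int. \<gamma> - N * X - \<eta> \<le> of_int \<kappa> \<and> of_int \<kappa> \<le> \<gamma> + N * X + \<eta>}"
        by (rule card_mono[rotated]) (rule fin_int_ivl)
      then have "real (card K) \<le> real (card {\<kappa>::int. \<gamma> - N * X - \<eta> \<le> of_int \<kappa> \<and> of_int \<kappa> \<le> \<gamma> + N * X + \<eta>})"
        by (rule of_nat_mono)
      moreover have "real (card {\<kappa>::int. \<gamma> - N * X - \<eta> \<le> of_int \<kappa> \<and> of_int \<kappa> \<le> \<gamma> + N * X + \<eta>}) \<le> (\<gamma> + N * X + \<eta>) - (\<gamma> - N * X - \<eta>) + 1"
        by (rule card_int_ivl) (use X0 \<eta>0 in auto)
      moreover have "\<eta> \<le> 1/2"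
      proof -
        have "\<sigma>^2 \<le> 1" using \<sigma>1 \<sigma>0 by (simp add: power_le_one)
        then show ?thesis using \<eta>\<sigma> by linarith
      qed
      ultimately show ?thesis by linarith
    qed
    have "(\<Sum>\<kappa>\<in>K. real (card (Fk \<kappa>))) \<le> real (card K) * (2 * \<eta> / X + 1)"
      using sum_bounded_above[of K "\<lambda>\<kappa>. real (card (Fk \<kappa>))" "2 * \<eta> / X + 1"] c2 by simp
    also have "\<dots> \<le> (2 * real N * X + 2) * (2 * \<eta> / X + 1)"
      using c3 X0 \<eta>0 by (intro mult_right_mono) auto
    also have "\<dots> = 4 * real N * \<eta> + 2 * real N * X + 4 * \<eta> / X + 2" using X0 by (simp add: field_simps)
    also have "\<dots> \<le> 8 * real N * \<eta> + 4 * \<eta> / X + 2"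
    proof -
      have "real N * X \<le> real N * (2 * \<eta>)" using X2 Npos by (intro mult_left_mono) auto
      then show ?thesis by linarith
    qed
    finally have up: "real (card T') \<le> 8 * real N * \<eta> + 4 * \<eta> / X + 2" using c1 by linarith
    have low: "\<sigma>^2 * N / 2 < real (card T')"
    proof -
      have "\<sigma>^2 * N / 2 = \<sigma> * N / (2/\<sigma>)" using \<sigma>0 by (simp add: power2_eq_square)
      also have "\<dots> < \<sigma> * N / q" using qgs q1 \<sigma>0 Npos by (intro divide_strict_left_mono) auto
      finally show ?thesis using cardT cardT' by linarith
    qed
    have a1: "8 * real N * \<eta> \<le> \<sigma>^2 * N / 4"
    proof -
      have "\<eta> * real N \<le> (\<sigma>^2/32) * real N" using \<eta>\<sigma> Npos by (intro mult_right_mono) auto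
      moreover have "8 * real N * \<eta> = 8 * (\<eta> * real N)" by simp
      moreover have "\<sigma>^2 * real N / 4 = 8 * ((\<sigma>^2/32) * real N)" by simp
      ultimately show ?thesis by linarith
    qed
    have a2: "2 \<le> \<sigma>^2 * N / 8"
    proof -
      have "16 \<le> \<sigma>^2 * N" using Nbig \<sigma>0 by (simp add: field_simps)
      then show ?thesis by simp
    qed
    have "\<sigma>^2 * N / 8 < 4 * \<eta> / X" using up low a1 a2 by linarith
    then have "X * (\<sigma>^2 * N) < 32 * \<eta>" using X0 by (simp add: field_simps)
    then have "X < 32 * \<eta> / (\<sigma>^2 * N)" using \<sigma>0 Npos by (simp add: field_simps)
    then show ?thesis using q1 qg abs\<beta> unfolding X_def by (intro exI[of _ q]) auto
  qed
qed



lemma nd_sum: "finite A \<Longrightarrow> nint_dist (\<Sum>a\<in>A. f a) \<le> (\<Sum>a\<in>A. nint_dist (f a))"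
proof (induction A rule: finite_induct)
  case empty then show ?case by (simp add: nint_dist_def)
next
  case (insert a A)
  then show ?case using nd_add[of "f a" "sum f A"] by simp
qed

definition dcoef :: "nat \<Rightarrow> (nat \<Rightarrow> real) \<Rightarrow> nat \<Rightarrow> nat \<Rightarrow> real" where
  "dcoef s b h j = (\<Sum>k\<in>{1..s-j}. b (j+k) * real (h choose k))"

lemma diff_F:
  assumes "1 \<le> s"
  shows "F s b (x + real h) - F s b x = F (s-1) (dcoef s b h) x"
proof -
  define t where "t i k = b i * real (h choose k) * (x gchoose (i - k))" for i k
  have v: "(x + real h) gchoose i = (\<Sum>k=0..i. real (h choose k) * (x gchoose (i-k)))" for i
    using gbinomial_Vandermonde[of "real h" x i] by (simp add: gchoose_nat add.commute)
  have "F s b (x + real h) = (\<Sum>i\<le>s. \<Sum>k=0..i. t i k)"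
    unfolding F_def t_def v by (simp add: sum_distrib_left mult.assoc)
  also have "\<dots> = (\<Sum>i\<le>s. b i * (x gchoose i) + (\<Sum>k\<in>{1..i}. t i k))"
    by (rule sum.cong) (auto simp: sum.atLeast_Suc_atMost t_def)
  finally have e1: "F s b (x + real h) - F s b x = (\<Sum>i\<le>s. \<Sum>k\<in>{1..i}. t i k)"
    by (simp add: sum.distrib F_def)
  have "(\<Sum>i\<le>s. \<Sum>k\<in>{1..i}. t i k) = (\<Sum>p\<in>Sigma {..s} (\<lambda>i. {1..i}). t (fst p) (snd p))"
    by (simp add: sum.Sigma split_def)
  also have "\<dots> = (\<Sum>p\<in>Sigma {..s-1} (\<lambda>j. {1..s-j}). t (fst p + snd p) (snd p))"
    by (rule sum.reindex_bij_witness[of _ "\<lambda>p. (fst p + snd p, snd p)" "\<lambda>p. (fst p - snd p, snd p)"])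
       (use assms in auto)
  also have "\<dots> = (\<Sum>j\<le>s-1. \<Sum>k\<in>{1..s-j}. t (j + k) k)"
    by (simp add: sum.Sigma split_def)
  also have "\<dots> = F (s-1) (dcoef s b h) x"
    unfolding F_def dcoef_def t_def by (simp add: sum_distrib_right)
  finally show ?thesis using e1 by simp
qed

lemma dvd_choose_D:
  assumes "1 \<le> k" "k \<le> s"
  shows "m dvd ((m * fact s) choose k)"
proof (cases "m = 0")
  case True then show ?thesis using assms by simp
next
  case False
  define D where "D = m * fact s"
  have D1: "1 \<le> D" using False unfolding D_def by (simp add: Suc_le_eq)
  obtain k' where k': "k = Suc k'" using assms by (cases k) auto
  obtain n where n: "D = Suc n" using D1 by (cases D) auto
  have "k * (D choose k) = D * (n choose k')" unfolding k' n by (rule Suc_times_binomial)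
  moreover obtain w where w: "fact s = k * w" using dvd_fact[OF assms] by (metis dvdE)
  ultimately have "k * (D choose k) = k * (m * w * (n choose k'))" unfolding D_def by (simp add: ac_simps)
  then have "D choose k = m * (w * (n choose k'))" using assms by simp
  then show ?thesis unfolding D_def by simp
qed

lemma choose_shift:
  assumes "i \<le> s"
  shows "\<exists>W. (n + m * fact s * u) choose i = (n choose i) + m * W"
proof (induction u)
  case 0 then show ?case by simp
next
  case (Suc u)
  then obtain W where W: "(n + m * fact s * u) choose i = (n choose i) + m * W" by auto
  define n' where "n' = n + m * fact s * u"
  have "(n' + m * fact s) choose i = (\<Sum>k=0..i. ((m * fact s) choose k) * (n' choose (i - k)))"
    using binomial_Vandermonde[of "m * fact s" n' i] by (simp add: add.commute)
  also have "\<dots> = (n' choose i) + (\<Sum>k\<in>{1..i}. ((m * fact s) choose k) * (n' choose (i - k)))"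
    by (simp add: sum.atLeast_Suc_atMost)
  finally have e: "(n' + m * fact s) choose i = (n' choose i) + (\<Sum>k\<in>{1..i}. ((m * fact s) choose k) * (n' choose (i - k)))" .
  have "m dvd (\<Sum>k\<in>{1..i}. ((m * fact s) choose k) * (n' choose (i - k)))"
    using assms by (intro dvd_sum) (auto intro!: dvd_mult2 dvd_choose_D)
  then obtain W2 where "(\<Sum>k\<in>{1..i}. ((m * fact s) choose k) * (n' choose (i - k))) = m * W2" by (metis dvdE)
  then have "(n' + m * fact s) choose i = (n choose i) + m * (W + W2)"
    using e W unfolding n'_def by (simp add: algebra_simps)
  moreover have "n + m * fact s * Suc u = n' + m * fact s" unfolding n'_def by simp
  ultimately show ?case by metis
qed

lemma choose_diff_bound:
  assumes "1 \<le> i" "n + d \<le> N"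
  shows "0 \<le> real ((n + d) choose i) - real (n choose i) \<and>
         real ((n + d) choose i) - real (n choose i) \<le> real d * real N ^ (i - 1)"
  using assms
proof (induction d)
  case 0 then show ?case by simp
next
  case (Suc d)
  obtain i' where i': "i = Suc i'" using Suc.prems by (cases i) auto
  have step: "(n + Suc d) choose i = ((n + d) choose i) + ((n + d) choose i')"
    using i' by (simp add: binomial_Suc_Suc)
  have IH: "0 \<le> real ((n + d) choose i) - real (n choose i) \<and>
         real ((n + d) choose i) - real (n choose i) \<le> real d * real N ^ (i - 1)"
    using Suc by simp
  have "(n + d) choose i' \<le> (n + d) ^ i'"
    by (cases "i' \<le> n + d") (auto intro: binomial_le_pow simp: binomial_eq_0)
  also have "\<dots> \<le> N ^ i'" using Suc.prems by (simp add: power_mono)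
  finally have bnd: "real ((n + d) choose i') \<le> real N ^ i'" by (metis of_nat_le_iff of_nat_power)
  have r: "real ((n + Suc d) choose i) = real ((n + d) choose i) + real ((n + d) choose i')"
    using step by simp
  have "real (Suc d) * real N ^ (i-1) = real d * real N^(i-1) + real N ^ i'" using i' by (simp add: algebra_simps)
  then show ?case using IH r bnd by linarith
qed

lemma ee_sub1_upper: "norm (ee x - 1) \<le> 2 * pi * \<bar>x\<bar>"
proof -
  define a where "a = 2 * pi * x"
  have "(norm (ee x - 1))^2 = (cos a - 1)^2 + (sin a)^2"
    by (simp add: ee_def a_def cmod_power2)
  also have "\<dots> = 2 - 2 * cos a" by (simp add: power2_eq_square algebra_simps sin_squared_eq)
  also have "\<dots> = 4 * (sin (a/2))^2" using cos_double_sin[of "a/2"] by simp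
  also have "\<dots> = (2 * \<bar>sin (a/2)\<bar>)^2" by (simp add: power2_eq_square)
  finally have sq: "(norm (ee x - 1))^2 = (2 * \<bar>sin (a/2)\<bar>)^2" .
  have "norm (ee x - 1) = 2 * \<bar>sin (a/2)\<bar>" using power2_eq_imp_eq[OF sq] by simp
  also have "\<dots> \<le> 2 * \<bar>a/2\<bar>" using abs_sin_x_le_abs_x[of "a/2"] by simp
  also have "\<dots> = 2 * pi * \<bar>x\<bar>" unfolding a_def by (simp add: abs_mult)
  finally show ?thesis .
qed

lemma convex_ivl:
  fixes J :: "nat set"
  assumes "finite J" "\<And>a b c. a \<in> J \<Longrightarrow> c \<in> J \<Longrightarrow> a \<le> b \<Longrightarrow> b \<le> c \<Longrightarrow> b \<in> J"
  shows "\<exists>u v. J = {u..<v}"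
proof (cases "J = {}")
  case True then show ?thesis by (intro exI[of _ 0]) auto
next
  case False
  have "J = {Min J..<Suc (Max J)}"
  proof
    show "J \<subseteq> {Min J..<Suc (Max J)}"
    proof
      fix b assume b: "b \<in> J"
      have "Min J \<le> b" using assms(1) b by (rule Min_le)
      moreover have "b \<le> Max J" using assms(1) b by (rule Max_ge)
      ultimately show "b \<in> {Min J..<Suc (Max J)}" by simp
    qed
    show "{Min J..<Suc (Max J)} \<subseteq> J"
    proof
      fix b assume "b \<in> {Min J..<Suc (Max J)}"
      then have "Min J \<le> b" "b \<le> Max J" by auto
      moreover have "Min J \<in> J" "Max J \<in> J" using assms(1) False by auto
      ultimately show "b \<in> J" using assms(2) by blast
    qed
  qed
  then show ?thesis by blast
qed




lemma F_split: "F (Suc s) b x = b 0 + b 1 * x + (\<Sum>i\<in>{2..Suc s}. b i * (x gchoose i))"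
proof -
  have "F (Suc s) b x = (\<Sum>i\<in>{0..Suc s}. b i * (x gchoose i))" unfolding F_def by (simp add: atMost_atLeast0)
  also have "\<dots> = b 0 * (x gchoose 0) + (b 1 * (x gchoose 1) + (\<Sum>i\<in>{2..Suc s}. b i * (x gchoose i)))"
    by (simp add: sum.atLeast_Suc_atMost numeral_2_eq_2)
  finally show ?thesis by simp
qed

lemma reidx_shift:
  fixes a c N :: nat
  assumes "a < c"
  shows "(\<Sum>y\<in>{y\<in>{1..N+c}. c < y + a \<and> y + a \<le> N + c}. f (y + a - c)) = (\<Sum>n\<in>{1..N}. f n)"
  by (rule sum.reindex_bij_witness[of _ "\<lambda>n. n + c - a" "\<lambda>y. y + a - c"]) (use assms in auto)

lemma avg_identity:
  fixes f :: "nat \<Rightarrow> complex" and D L N :: nat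
  assumes "1 \<le> D"
  shows "(\<Sum>y\<in>{1..N + D*L}. \<Sum>t\<in>{t\<in>{..<L}. D*L < y + D*t \<and> y + D*t \<le> N + D*L}. f (y + D*t - D*L))
         = of_nat L * (\<Sum>n\<in>{1..N}. f n)"
proof -
  have "(\<Sum>y\<in>{1..N + D*L}. \<Sum>t\<in>{t\<in>{..<L}. D*L < y + D*t \<and> y + D*t \<le> N + D*L}. f (y + D*t - D*L))
      = (\<Sum>y\<in>{1..N + D*L}. \<Sum>t\<in>{..<L}. if D*L < y + D*t \<and> y + D*t \<le> N + D*L then f (y + D*t - D*L) else 0)"
    by (rule sum.cong[OF refl], rule sum.inter_filter) simp
  also have "\<dots> = (\<Sum>t\<in>{..<L}. \<Sum>y\<in>{1..N + D*L}. if D*L < y + D*t \<and> y + D*t \<le> N + D*L then f (y + D*t - D*L) else 0)"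
    by (rule sum.swap)
  also have "\<dots> = (\<Sum>t\<in>{..<L}. \<Sum>y\<in>{y\<in>{1..N + D*L}. D*L < y + D*t \<and> y + D*t \<le> N + D*L}. f (y + D*t - D*L))"
    by (rule sum.cong[OF refl], rule sum.inter_filter[symmetric]) simp
  also have "\<dots> = (\<Sum>t\<in>{..<L}. \<Sum>n\<in>{1..N}. f n)"
  proof (rule sum.cong[OF refl])
    fix t assume "t \<in> {..<L}"
    then have tl: "D * t < D * L" using assms by simp
    show "(\<Sum>y\<in>{y\<in>{1..N + D*L}. D*L < y + D*t \<and> y + D*t \<le> N + D*L}. f (y + D*t - D*L)) = (\<Sum>n\<in>{1..N}. f n)"
      by (rule reidx_shift[OF tl])
  qed
  also have "\<dots> = of_nat L * (\<Sum>n\<in>{1..N}. f n)" by simp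
  finally show ?thesis .
qed

lemma phase_decomp:
  fixes b :: "nat \<Rightarrow> real" and s m n0 d :: nat
  assumes m1: "1 \<le> m"
  defines "n1 \<equiv> n0 + m * fact (Suc s) * d"
  shows "\<exists>z::int. F (Suc s) b (real n1) = F (Suc s) b (real n0) + b 1 * real (m * fact (Suc s) * d) + of_int z
     + (\<Sum>i\<in>{2..Suc s}. (real m * b i - of_int (round (real m * b i))) / real m * (real (n1 choose i) - real (n0 choose i)))"
proof -
  define e where "e i = real m * b i - of_int (round (real m * b i))" for i
  have "\<forall>i\<in>{2..Suc s}. \<exists>W. n1 choose i = (n0 choose i) + m * W"
    unfolding n1_def using choose_shift[of _ "Suc s" n0 m d] by (auto simp del: fact_Suc)
  then obtain W where W: "\<forall>i\<in>{2..Suc s}. n1 choose i = (n0 choose i) + m * W i" by metis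
  have mpos: "0 < real m" using m1 by simp
  have trm: "b i * (real (n1 choose i) - real (n0 choose i)) = of_int (round (real m * b i) * int (W i))
      + e i / real m * (real (n1 choose i) - real (n0 choose i))" if i: "i \<in> {2..Suc s}" for i
  proof -
    have "real (n1 choose i) - real (n0 choose i) = real m * real (W i)" using W i by simp
    then show ?thesis unfolding e_def using mpos by (simp add: field_simps)
  qed
  have "F (Suc s) b (real n1) - F (Suc s) b (real n0) = b 1 * (real n1 - real n0)
        + (\<Sum>i\<in>{2..Suc s}. b i * (real (n1 choose i) - real (n0 choose i)))"
    by (simp add: F_split gchoose_nat sum_subtractf right_diff_distrib algebra_simps)
  also have "(\<Sum>i\<in>{2..Suc s}. b i * (real (n1 choose i) - real (n0 choose i)))
     = of_int (\<Sum>i\<in>{2..Suc s}. round (real m * b i) * int (W i)) + (\<Sum>i\<in>{2..Suc s}. e i / real m * (real (n1 choose i) - real (n0 choose i)))"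
    using trm by (simp add: sum.distrib)
  finally show ?thesis unfolding e_def n1_def by (intro exI[of _ "\<Sum>i\<in>{2..Suc s}. round (real m * b i) * int (W i)"]) (simp add: algebra_simps)
qed

lemma psi_term_bound:
  fixes bi \<Delta> E :: real and m i N K dd :: nat
  assumes m1: "1 \<le> m" and i1: "1 \<le> i" and Eb: "real N ^ i * nint_dist (real m * bi) \<le> E"
    and D0: "0 \<le> \<Delta>" and D1: "\<Delta> \<le> real dd * real N ^ (i-1)" and dK: "real dd * real K \<le> real N"
    and K1: "1 \<le> K"
  shows "\<bar>(real m * bi - of_int (round (real m * bi))) / real m * \<Delta>\<bar> \<le> E / real K"
proof -
  define \<epsilon> where "\<epsilon> = nint_dist (real m * bi)"
  have e0: "0 \<le> \<epsilon>" unfolding \<epsilon>_def by (rule nd_nonneg)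
  have "\<bar>(real m * bi - of_int (round (real m * bi))) / real m * \<Delta>\<bar> = \<epsilon> / real m * \<Delta>"
    unfolding \<epsilon>_def nint_dist_def using D0 m1 by (simp add: abs_mult)
  also have "\<dots> \<le> \<epsilon> * \<Delta>" using m1 e0 D0 by (simp add: divide_le_eq mult_le_cancel_left1 field_simps mult_left_mono mult_right_mono)
  also have "\<dots> \<le> \<epsilon> * (real dd * real N ^ (i-1))" using D1 e0 by (rule mult_left_mono)
  also have "\<dots> \<le> E / real K"
  proof -
    have "\<epsilon> * (real dd * real N ^ (i-1)) * real K = \<epsilon> * real N ^ (i-1) * (real dd * real K)" by simp
    also have "\<dots> \<le> \<epsilon> * real N ^ (i-1) * real N" using dK e0 by (intro mult_left_mono) auto
    also have "\<dots> = real N ^ i * \<epsilon>" using i1 by (cases i) auto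
    also have "\<dots> \<le> E" using Eb unfolding \<epsilon>_def .
    finally show ?thesis using K1 by (simp add: field_simps)
  qed
  finally show ?thesis .
qed

lemma lin_step:
  fixes b :: "nat \<Rightarrow> real" and s m N K :: nat and E \<delta> :: real
  assumes \<delta>0: "0 < \<delta>" and m1: "1 \<le> m"
    and hyp: "\<delta> * real N \<le> norm (\<Sum>n\<in>{1..N}. ee (F (Suc s) b (real n)))"
    and Eb: "\<forall>i\<in>{2..Suc s}. real N ^ i * nint_dist (real m * b i) \<le> E"
    and K1: "1 \<le> K" and KE: "2 * pi * real s * E \<le> \<delta> * real K / 4"
    and NK: "2 * (m * fact (Suc s) * K) \<le> N"
  shows "real N * nint_dist (real (m * fact (Suc s)) * b 1) \<le> 16 * real (m * fact (Suc s)) * real K / \<delta>"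
proof -
  define D where "D = m * fact (Suc s)"
  have D1: "1 \<le> D" unfolding D_def using m1 by (simp add: Suc_le_eq)
  define L where "L = N div (D * K)"
  have DK1: "1 \<le> D * K" using D1 K1 by simp
  have NK': "2 * (D*K) \<le> N" using NK unfolding D_def by simp
  have "2 = (2 * (D*K)) div (D*K)" using DK1 by simp
  also have "\<dots> \<le> L" unfolding L_def using NK' by (rule div_le_mono)
  finally have L2: "2 \<le> L" .
  then have L1: "1 \<le> L" by simp
  have DKL: "D * K * L \<le> N" unfolding L_def by (metis div_times_less_eq_dividend mult.commute)
  have "N = D * K * L + N mod (D*K)" unfolding L_def by simp
  moreover have "N mod (D*K) < D * K" using DK1 by simp
  ultimately have "N \<le> D * K * L + D * K" by linarith
  also have "\<dots> \<le> 2 * (D * K * L)" using L1 by simp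
  finally have Nle: "real N \<le> 2 * real D * real K * real L" by (metis of_nat_le_iff of_nat_mult of_nat_numeral mult.assoc)
  have N1: "1 \<le> N" using NK' DK1 by linarith
  have DLN: "D * L \<le> N" using DKL K1 by (metis le_trans mult.commute mult_le_mono2 mult.assoc nat_mult_1_right)
  have DLNr: "real D * real L \<le> real N" using DLN by (metis of_nat_le_iff of_nat_mult)
  define f where "f n = ee (F (Suc s) b (real n))" for n
  define J where "J y = {t\<in>{..<L}. D*L < y + D*t \<and> y + D*t \<le> N + D*L}" for y
  define g where "g y = (\<Sum>t\<in>J y. f (y + D*t - D*L))" for y
  have avg: "(\<Sum>y\<in>{1..N + D*L}. g y) = of_nat L * (\<Sum>n\<in>{1..N}. f n)"
    unfolding g_def J_def using avg_identity[OF D1] by simp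
  have "\<exists>y\<in>{1..N + D*L}. \<delta> * real L / 2 \<le> norm (g y)"
  proof (rule ccontr)
    assume "\<not> ?thesis"
    then have lt: "\<forall>y\<in>{1..N + D*L}. norm (g y) < \<delta> * real L / 2" by auto
    have "(\<Sum>y\<in>{1..N + D*L}. norm (g y)) < (\<Sum>y\<in>{1..N + D*L}. \<delta> * real L / 2)"
      by (rule sum_strict_mono) (use lt N1 in auto)
    also have "\<dots> = real (N + D*L) * (\<delta> * real L / 2)" by simp
    also have "\<dots> \<le> real (2 * N) * (\<delta> * real L / 2)" using DLNr \<delta>0 by (intro mult_right_mono) auto
    also have "\<dots> = real L * (\<delta> * real N)" by simp
    also have "\<dots> \<le> real L * norm (\<Sum>n\<in>{1..N}. f n)" using hyp unfolding f_def by (intro mult_left_mono) auto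
    also have "\<dots> = norm (\<Sum>y\<in>{1..N + D*L}. g y)" unfolding avg by (simp add: norm_mult)
    also have "\<dots> \<le> (\<Sum>y\<in>{1..N + D*L}. norm (g y))" by (rule norm_sum)
    finally show False by simp
  qed
  then obtain y where ybig: "\<delta> * real L / 2 \<le> norm (g y)" by blast
  have Jfin: "finite (J y)" unfolding J_def by simp
  have Jconv: "\<And>p q r. p \<in> J y \<Longrightarrow> r \<in> J y \<Longrightarrow> p \<le> q \<Longrightarrow> q \<le> r \<Longrightarrow> q \<in> J y"
  proof -
    fix p q r assume aJ: "p \<in> J y" and cJ: "r \<in> J y" and ab: "p \<le> q" and bc: "q \<le> r"
    have m1': "D * p \<le> D * q" "D * q \<le> D * r" using ab bc by auto
    have A: "D*L < y + D*p" "y + D*r \<le> N + D*L" "r < L" using aJ cJ unfolding J_def by auto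
    have "q < L" using bc A by linarith
    moreover have "D*L < y + D*q" using A(1) m1' by linarith
    moreover have "y + D*q \<le> N + D*L" using A(2) m1' by linarith
    ultimately show "q \<in> J y" unfolding J_def by simp
  qed
  have "\<exists>u v. J y = {u..<v}" using Jconv by (intro convex_ivl[OF Jfin]) blast
  then obtain u v where Juv: "J y = {u..<v}" by blast
  have Jne: "J y \<noteq> {}"
  proof
    assume "J y = {}"
    then have "g y = 0" unfolding g_def by simp
    moreover have "0 < \<delta> * real L" using \<delta>0 L1 by simp
    ultimately show False using ybig by simp
  qed
  then have uv: "u < v" using Juv by auto
  have uJ: "u \<in> J y" using Juv uv by auto
  have vL: "v \<le> L" using Juv uv unfolding J_def by (metis (no_types, lifting) atLeastLessThan_iff diff_less le_eq_less_or_eq lessThan_iff mem_Collect_eq not_less zero_less_one less_imp_diff_less Suc_pred le_less_trans less_Suc_eq_le)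
  have uJ': "D*L < y + D*u" using uJ unfolding J_def by auto
  define n0 where "n0 = y + D*u - D*L"
  have tJ: "D*L < y + D*t \<and> y + D*t \<le> N + D*L \<and> t < L" if "t \<in> {u..<v}" for t
  proof -
    have "t \<in> J y" using that Juv by simp
    then show ?thesis unfolding J_def by simp
  qed
  have nt: "y + D*t - D*L = n0 + D*(t-u)" if "t \<in> {u..<v}" for t
  proof -
    have "D*u \<le> D*t" using that by auto
    moreover have "D*(t-u) = D*t - D*u" by (simp add: diff_mult_distrib2)
    ultimately show ?thesis unfolding n0_def using uJ' by linarith
  qed
  have ntN: "n0 + D*(t-u) \<le> N" if "t \<in> {u..<v}" for t
    using nt[OF that] tJ[OF that] by linarith
  have dtL: "D*(t-u) \<le> D*L" if "t \<in> {u..<v}" for t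
    using tJ[OF that] by (intro mult_le_mono2) linarith
  define \<beta> where "\<beta> = b 1 * real D"
  define e where "e i = real m * b i - of_int (round (real m * b i))" for i
  define \<psi> where "\<psi> t = (\<Sum>i\<in>{2..Suc s}. e i / real m * (real ((n0 + D*(t-u)) choose i) - real (n0 choose i)))" for t
  define c where "c = ee (F (Suc s) b (real n0) - \<beta> * real u)"
  have fdec: "f (y + D*t - D*L) = c * ee (\<beta> * real t) * ee (\<psi> t)" if tin: "t \<in> {u..<v}" for t
  proof -
    obtain z where z: "F (Suc s) b (real (n0 + m * fact (Suc s) * (t-u))) = F (Suc s) b (real n0)
        + b 1 * real (m * fact (Suc s) * (t-u)) + of_int z + \<psi> t"
      using phase_decomp[OF m1, of s b n0 "t-u"] unfolding \<psi>_def e_def D_def by blast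
    have ut: "u \<le> t" using tin by simp
    have zD: "F (Suc s) b (real (n0 + D * (t-u))) = F (Suc s) b (real n0)
        + b 1 * real (D * (t-u)) + of_int z + \<psi> t"
      using z by (simp only: D_def[symmetric])
    have eqX: "real (D * (t - u)) = real D * real t - real D * real u"
      using ut by (simp add: of_nat_diff right_diff_distrib)
    have zD2: "F (Suc s) b (real (n0 + D * (t-u))) = F (Suc s) b (real n0)
        + b 1 * (real D * real t - real D * real u) + of_int z + \<psi> t"
      using zD by (simp only: eqX)
    have "F (Suc s) b (real (n0 + D * (t-u))) = (F (Suc s) b (real n0) - \<beta> * real u) + \<beta> * real t + \<psi> t + of_int z"
      unfolding zD2 \<beta>_def by (simp add: algebra_simps)
    then have "f (n0 + D*(t-u)) = ee ((F (Suc s) b (real n0) - \<beta> * real u) + \<beta> * real t + \<psi> t)"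
      unfolding f_def by (simp add: ee_int_add)
    then show ?thesis using nt[OF tin] unfolding c_def by (simp add: ee_add)
  qed
  have psi_b: "\<bar>\<psi> t\<bar> \<le> real s * E / real K" if tin: "t \<in> {u..<v}" for t
  proof -
    have "\<bar>\<psi> t\<bar> \<le> (\<Sum>i\<in>{2..Suc s}. \<bar>e i / real m * (real ((n0 + D*(t-u)) choose i) - real (n0 choose i))\<bar>)"
      unfolding \<psi>_def by (rule sum_abs)
    also have "\<dots> \<le> (\<Sum>i\<in>{2..Suc s}. E / real K)"
    proof (rule sum_mono)
      fix i assume i: "i \<in> {2..Suc s}"
      have cb: "0 \<le> real ((n0 + D*(t-u)) choose i) - real (n0 choose i) \<and>
         real ((n0 + D*(t-u)) choose i) - real (n0 choose i) \<le> real (D*(t-u)) * real N ^ (i - 1)"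
        using choose_diff_bound[of i n0 "D*(t-u)" N] i ntN[OF tin] by simp
      have dK: "real (D*(t-u)) * real K \<le> real N"
      proof -
        have "D*(t-u)*K \<le> D*L*K" using dtL[OF tin] by simp
        also have "\<dots> \<le> N" using DKL by (simp add: ac_simps)
        finally show ?thesis by (metis of_nat_le_iff of_nat_mult)
      qed
      have i1: "1 \<le> i" using i by simp
      have Ebi: "real N ^ i * nint_dist (real m * b i) \<le> E" using Eb i by blast
      show "\<bar>e i / real m * (real ((n0 + D*(t-u)) choose i) - real (n0 choose i))\<bar> \<le> E / real K"
        unfolding e_def using psi_term_bound[OF m1 i1 Ebi conjunct1[OF cb] conjunct2[OF cb] dK K1] .
    qed
    also have "\<dots> = real s * E / real K" by simp
    finally show ?thesis .
  qed
  have gy: "g y = c * (\<Sum>t\<in>{u..<v}. ee (\<beta> * real t) * ee (\<psi> t))"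
    unfolding g_def Juv by (simp add: fdec sum_distrib_left mult.assoc)
  have split: "(\<Sum>t\<in>{u..<v}. ee (\<beta> * real t) * ee (\<psi> t)) =
     (\<Sum>t\<in>{u..<v}. ee (\<beta> * real t)) + (\<Sum>t\<in>{u..<v}. ee (\<beta> * real t) * (ee (\<psi> t) - 1))"
    by (simp add: sum.distrib[symmetric] algebra_simps)
  have "norm (g y) \<le> norm (\<Sum>t\<in>{u..<v}. ee (\<beta> * real t)) + (\<Sum>t\<in>{u..<v}. norm (ee (\<psi> t) - 1))"
  proof -
    have "norm (g y) = norm (\<Sum>t\<in>{u..<v}. ee (\<beta> * real t) * ee (\<psi> t))"
      unfolding gy c_def by (simp add: norm_mult)
    also have "\<dots> \<le> norm (\<Sum>t\<in>{u..<v}. ee (\<beta> * real t)) + norm (\<Sum>t\<in>{u..<v}. ee (\<beta> * real t) * (ee (\<psi> t) - 1))"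
      unfolding split by (rule norm_triangle_ineq)
    also have "norm (\<Sum>t\<in>{u..<v}. ee (\<beta> * real t) * (ee (\<psi> t) - 1)) \<le> (\<Sum>t\<in>{u..<v}. norm (ee (\<psi> t) - 1))"
      using norm_sum[of "\<lambda>t. ee (\<beta> * real t) * (ee (\<psi> t) - 1)" "{u..<v}"] by (simp add: norm_mult)
    finally show ?thesis by simp
  qed
  moreover have "(\<Sum>t\<in>{u..<v}. norm (ee (\<psi> t) - 1)) \<le> \<delta> * real L / 4"
  proof -
    have "(\<Sum>t\<in>{u..<v}. norm (ee (\<psi> t) - 1)) \<le> (\<Sum>t\<in>{u..<v}. 2 * pi * (real s * E / real K))"
    proof (rule sum_mono)
      fix t assume "t \<in> {u..<v}"
      then have "\<bar>\<psi> t\<bar> \<le> real s * E / real K" using psi_b by blast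
      then have "2 * pi * \<bar>\<psi> t\<bar> \<le> 2 * pi * (real s * E / real K)" by (intro mult_left_mono) auto
      then show "norm (ee (\<psi> t) - 1) \<le> 2 * pi * (real s * E / real K)" using ee_sub1_upper[of "\<psi> t"] by linarith
    qed
    also have "\<dots> = real (v - u) * (2 * pi * real s * E / real K)" by simp
    also have "\<dots> \<le> real L * (\<delta> / 4)"
    proof (rule mult_mono)
      show "real (v - u) \<le> real L" using vL by simp
      show "2 * pi * real s * E / real K \<le> \<delta> / 4" using KE K1 by (simp add: divide_le_eq)
      show "0 \<le> real L" by simp
      show "0 \<le> 2 * pi * real s * E / real K"
      proof (cases "s = 0")
        case True then show ?thesis by simp
      next
        case False
        then have "2 \<in> {2..Suc s}" by simp
        then have "real N ^ 2 * nint_dist (real m * b 2) \<le> E" using Eb by blast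
        moreover have "0 \<le> real N ^ 2 * nint_dist (real m * b 2)" by (simp add: nd_nonneg)
        ultimately have "0 \<le> E" by linarith
        then show ?thesis by simp
      qed
    qed
    finally show ?thesis by (simp add: mult.commute)
  qed
  ultimately have big: "\<delta> * real L / 4 \<le> norm (\<Sum>t\<in>{u..<v}. ee (\<beta> * real t))" using ybig by linarith
  have gb: "nint_dist \<beta> * norm (\<Sum>t\<in>{u..<v}. ee (\<beta> * real t)) \<le> 2" by (rule geom_bound)
  have "nint_dist \<beta> * (\<delta> * real L / 4) \<le> 2"
    using mult_left_mono[OF big nd_nonneg[of \<beta>]] gb by linarith
  then have ndb: "nint_dist \<beta> * real L \<le> 8 / \<delta>" using \<delta>0 by (simp add: field_simps)
  have "real N * nint_dist \<beta> \<le> 2 * real D * real K * real L * nint_dist \<beta>"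
    using Nle nd_nonneg[of \<beta>] by (intro mult_right_mono) auto
  also have "\<dots> = 2 * real D * real K * (nint_dist \<beta> * real L)" by simp
  also have "\<dots> \<le> 2 * real D * real K * (8 / \<delta>)" using ndb by (intro mult_left_mono) auto
  also have "\<dots> = 16 * real D * real K / \<delta>" by simp
  finally show ?thesis unfolding \<beta>_def D_def by (simp add: mult.commute)
qed




lemma many_h:
  fixes b :: "nat \<Rightarrow> real" and s N :: nat and \<delta> :: real
  assumes \<delta>0: "0 < \<delta>" and Nbig: "2 / \<delta>^2 \<le> real N"
    and hyp: "\<delta> * real N \<le> norm (\<Sum>n\<in>{1..N}. ee (F (Suc s) b (real n)))"
  shows "\<exists>G \<subseteq> {1..<N}. \<delta>^2 * real N / 8 \<le> real (card G) \<and>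
     (\<forall>h\<in>G. \<delta>^2 * real N / 8 \<le> real (N - h) \<and>
        \<delta>^2 / 8 * real (N - h) \<le> norm (\<Sum>m\<in>{1..N-h}. ee (F s (dcoef (Suc s) b h) (real m))))"
proof -
  define R where "R h = norm (\<Sum>m\<in>{1..N-h}. ee (F s (dcoef (Suc s) b h) (real m)))" for h
  have Npos: "0 < real N" using Nbig \<delta>0 by (smt (verit) divide_pos_pos zero_less_power)
  have Rdef: "R h = norm (\<Sum>m\<in>{1..N-h}. ee (F (Suc s) b (real (m+h)) - F (Suc s) b (real m)))" for h
    unfolding R_def using diff_F[of "Suc s" b] by simp
  have Rle: "R h \<le> real (N - h)" for h
  proof -
    have "R h \<le> (\<Sum>m\<in>{1..N-h}. norm (ee (F s (dcoef (Suc s) b h) (real m))))" unfolding R_def by (rule norm_sum)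
    also have "\<dots> = real (N - h)" by simp
    finally show ?thesis .
  qed
  have "(\<delta> * real N)^2 \<le> (norm (\<Sum>n\<in>{1..N}. ee (F (Suc s) b (real n))))^2"
    using hyp \<delta>0 Npos by (intro power_mono) auto
  also have "\<dots> \<le> real N + 2 * (\<Sum>h\<in>{1..<N}. R h)"
    unfolding Rdef using sq_expand[of "\<lambda>n. F (Suc s) b (real n)" N] by simp
  finally have sq: "(\<delta> * real N)^2 \<le> real N + 2 * (\<Sum>h\<in>{1..<N}. R h)" .
  have "real N \<le> (\<delta> * real N)^2 / 2"
  proof -
    have "2 \<le> \<delta>^2 * real N" using Nbig \<delta>0 by (simp add: field_simps)
    then have "2 * real N \<le> \<delta>^2 * real N * real N" using Npos by (intro mult_right_mono[of 2 "\<delta>^2 * real N" "real N", simplified]) auto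
    then show ?thesis by (simp add: power_mult_distrib power2_eq_square ac_simps)
  qed
  then have sumR: "\<delta>^2 * real N^2 / 4 \<le> (\<Sum>h\<in>{1..<N}. R h)" using sq by (simp add: power_mult_distrib)
  define G where "G = {h\<in>{1..<N}. \<delta>^2 * real N / 8 \<le> R h}"
  have "(\<Sum>h\<in>{1..<N}. R h) = (\<Sum>h\<in>{1..<N} - G. R h) + (\<Sum>h\<in>G. R h)"
    by (rule sum.subset_diff) (auto simp: G_def)
  moreover have "(\<Sum>h\<in>{1..<N} - G. R h) \<le> real N * (\<delta>^2 * real N / 8)"
  proof -
    have "(\<Sum>h\<in>{1..<N} - G. R h) \<le> (\<Sum>h\<in>{1..<N} - G. \<delta>^2 * real N / 8)"
      by (rule sum_mono) (auto simp: G_def)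
    also have "\<dots> = real (card ({1..<N} - G)) * (\<delta>^2 * real N / 8)" by simp
    also have "\<dots> \<le> real N * (\<delta>^2 * real N / 8)"
    proof (rule mult_right_mono)
      have "card ({1..<N} - G) \<le> card {1..<N}" by (rule card_mono) auto
      then show "real (card ({1..<N} - G)) \<le> real N" by simp
    qed simp
    finally show ?thesis .
  qed
  moreover have e1: "real N * (\<delta>^2 * real N / 8) = \<delta>^2 * real N^2 / 8" by (simp add: power2_eq_square)
  ultimately have sumG: "\<delta>^2 * real N^2 / 8 \<le> (\<Sum>h\<in>G. R h)" using sumR by linarith
  have RN: "R h \<le> real N" for h using Rle[of h] by (smt (verit) of_nat_le_iff diff_le_self)
  have "(\<Sum>h\<in>G. R h) \<le> (\<Sum>h\<in>G. real N)" by (rule sum_mono) (rule RN)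
  also have "\<dots> = real (card G) * real N" by simp
  finally have "\<delta>^2 * real N / 8 * real N \<le> real (card G) * real N" using sumG by (simp add: power2_eq_square)
  then have cG: "\<delta>^2 * real N / 8 \<le> real (card G)" using Npos by simp
  show ?thesis
  proof (intro exI[of _ G] conjI ballI)
    show "G \<subseteq> {1..<N}" unfolding G_def by auto
    show "\<delta>^2 * real N / 8 \<le> real (card G)" by (rule cG)
  next
    fix h assume h: "h \<in> G"
    then have Rh: "\<delta>^2 * real N / 8 \<le> R h" unfolding G_def by auto
    then show "\<delta>^2 * real N / 8 \<le> real (N - h)" using Rle[of h] by linarith
    have "\<delta>^2 / 8 * real (N - h) \<le> \<delta>^2 / 8 * real N" by (intro mult_left_mono) auto
    then show "\<delta>^2 / 8 * real (N - h) \<le> norm (\<Sum>m\<in>{1..N-h}. ee (F s (dcoef (Suc s) b h) (real m)))"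
      using Rh unfolding R_def by simp
  qed
qed

primrec Eseq :: "real \<Rightarrow> real \<Rightarrow> real \<Rightarrow> real \<Rightarrow> nat \<Rightarrow> real" where
  "Eseq c w A B 0 = 0"
| "Eseq c w A B (Suc r) = c * Eseq c w A B r + w * (c^r * A + B * Eseq c w A B r)"

lemma Eseq_nonneg: "0 \<le> c \<Longrightarrow> 0 \<le> w \<Longrightarrow> 0 \<le> A \<Longrightarrow> 0 \<le> B \<Longrightarrow> 0 \<le> Eseq c w A B r"
  by (induction r) auto

lemma Eseq_mono:
  assumes "1 \<le> c" "0 \<le> w" "0 \<le> A" "0 \<le> B" "r \<le> r'"
  shows "Eseq c w A B r \<le> Eseq c w A B r'"
  using assms(5)
proof (induction r' rule: dec_induct)
  case base then show ?case by simp
next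
  case (step n)
  have e: "0 \<le> Eseq c w A B n" using assms by (intro Eseq_nonneg) auto
  have "Eseq c w A B n \<le> c * Eseq c w A B n" using e assms(1) by (simp add: mult_le_cancel_right1)
  moreover have "0 \<le> w * (c^n * A + B * Eseq c w A B n)" using assms e by simp
  ultimately show ?case using step by simp
qed

lemma choose_le_Npow: "h \<le> N \<Longrightarrow> real (h choose k) \<le> real N ^ k"
proof -
  assume hN: "h \<le> N"
  have "h choose k \<le> h ^ k" by (cases "k \<le> h") (auto intro: binomial_le_pow simp: binomial_eq_0)
  also have "\<dots> \<le> N ^ k" using hN by (simp add: power_mono)
  finally show ?thesis by (metis of_nat_le_iff of_nat_power)
qed

lemma step_est:
  fixes b :: "nat \<Rightarrow> real" and s r j m q0 Q1 N h :: nat and A E :: real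
  assumes j: "j = s - r" and rs: "r < s" and hN: "h \<le> N" and q0Q: "q0 \<le> Q1"
    and H: "real N ^ j * nint_dist (real q0 * dcoef (Suc s) b h j) \<le> A"
    and IH: "\<forall>i. Suc s - r < i \<and> i \<le> Suc s \<longrightarrow> real N ^ i * nint_dist (real m * b i) \<le> E"
    and E0: "0 \<le> E"
  shows "real N ^ j * nint_dist (real m * real q0 * b (Suc j) * real h) \<le> real m * A + real s * real Q1 * E"
proof -
  have sj: "Suc s - j = Suc r" using j rs by simp
  define T where "T = (\<Sum>k\<in>{2..Suc r}. real (q0 * (h choose k)) * (real m * b (j+k)))"
  have "dcoef (Suc s) b h j = (\<Sum>k\<in>{1..Suc r}. b (j+k) * real (h choose k))"
    unfolding dcoef_def sj ..
  also have "\<dots> = b (Suc j) * real h + (\<Sum>k\<in>{2..Suc r}. b (j+k) * real (h choose k))"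
    by (simp add: sum.atLeast_Suc_atMost numeral_2_eq_2)
  finally have dc: "dcoef (Suc s) b h j = b (Suc j) * real h + (\<Sum>k\<in>{2..Suc r}. b (j+k) * real (h choose k))" .
  have xeq: "real m * real q0 * b (Suc j) * real h = real m * (real q0 * dcoef (Suc s) b h j) - T"
    unfolding dc T_def by (simp add: algebra_simps sum_distrib_left)
  have "nint_dist (real m * real q0 * b (Suc j) * real h) \<le> nint_dist (real m * (real q0 * dcoef (Suc s) b h j)) + nint_dist T"
    unfolding xeq by (rule nd_diff)
  also have "\<dots> \<le> real m * nint_dist (real q0 * dcoef (Suc s) b h j) + (\<Sum>k\<in>{2..Suc r}. real (q0 * (h choose k)) * nint_dist (real m * b (j+k)))"
  proof (rule add_mono)
    show "nint_dist (real m * (real q0 * dcoef (Suc s) b h j)) \<le> real m * nint_dist (real q0 * dcoef (Suc s) b h j)"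
      by (rule nd_mult_nat)
    have "nint_dist T \<le> (\<Sum>k\<in>{2..Suc r}. nint_dist (real (q0 * (h choose k)) * (real m * b (j+k))))"
      unfolding T_def by (rule nd_sum) simp
    also have "\<dots> \<le> (\<Sum>k\<in>{2..Suc r}. real (q0 * (h choose k)) * nint_dist (real m * b (j+k)))"
      by (rule sum_mono) (rule nd_mult_nat)
    finally show "nint_dist T \<le> (\<Sum>k\<in>{2..Suc r}. real (q0 * (h choose k)) * nint_dist (real m * b (j+k)))" .
  qed
  finally have nd1: "nint_dist (real m * real q0 * b (Suc j) * real h) \<le> real m * nint_dist (real q0 * dcoef (Suc s) b h j) + (\<Sum>k\<in>{2..Suc r}. real (q0 * (h choose k)) * nint_dist (real m * b (j+k)))" .
  have t1: "real N ^ j * (real m * nint_dist (real q0 * dcoef (Suc s) b h j)) \<le> real m * A"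
    using H by (simp add: mult.left_commute mult_left_mono)
  have t2: "real N ^ j * (real (q0 * (h choose k)) * nint_dist (real m * b (j+k))) \<le> real Q1 * E" if k: "k \<in> {2..Suc r}" for k
  proof -
    have ik: "Suc s - r < j + k \<and> j + k \<le> Suc s" using k j rs by auto
    have Ei: "real N ^ (j+k) * nint_dist (real m * b (j+k)) \<le> E" using IH ik by blast
    have "real N ^ j * (real (q0 * (h choose k)) * nint_dist (real m * b (j+k)))
        = real q0 * real (h choose k) * (real N ^ j * nint_dist (real m * b (j+k)))" by simp
    also have "\<dots> \<le> real Q1 * real N ^ k * (real N ^ j * nint_dist (real m * b (j+k)))"
      using q0Q choose_le_Npow[OF hN, of k] nd_nonneg
      by (intro mult_right_mono mult_mono) auto
    also have "\<dots> = real Q1 * (real N ^ (j+k) * nint_dist (real m * b (j+k)))" by (simp add: power_add)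
    also have "\<dots> \<le> real Q1 * E" using Ei by (intro mult_left_mono) auto
    finally show ?thesis .
  qed
  have "real N ^ j * nint_dist (real m * real q0 * b (Suc j) * real h)
      \<le> real N ^ j * (real m * nint_dist (real q0 * dcoef (Suc s) b h j) + (\<Sum>k\<in>{2..Suc r}. real (q0 * (h choose k)) * nint_dist (real m * b (j+k))))"
    using nd1 by (intro mult_left_mono) auto
  also have "\<dots> = real N ^ j * (real m * nint_dist (real q0 * dcoef (Suc s) b h j)) + (\<Sum>k\<in>{2..Suc r}. real N ^ j * (real (q0 * (h choose k)) * nint_dist (real m * b (j+k))))"
    by (simp add: distrib_left sum_distrib_left)
  also have "\<dots> \<le> real m * A + (\<Sum>k\<in>{2..Suc r}. real Q1 * E)"
    using t1 t2 by (intro add_mono sum_mono) auto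
  also have "\<dots> = real m * A + real r * (real Q1 * E)" by simp
  also have "\<dots> \<le> real m * A + real s * real Q1 * E"
    using rs E0 by (simp add: mult_right_mono mult.assoc)
  finally show ?thesis .
qed

lemma descent:
  fixes b :: "nat \<Rightarrow> real" and s N Q1 q0 r :: nat and \<sigma> A :: real and G0 :: "nat set"
  assumes \<sigma>0: "0 < \<sigma>" and \<sigma>1: "\<sigma> \<le> 1" and Q1: "1 \<le> Q1" and q0: "1 \<le> q0" "q0 \<le> Q1" and A0: "0 \<le> A"
    and G0: "G0 \<subseteq> {1..N}" "\<sigma> * real N \<le> real (card G0)"
    and H: "\<forall>h\<in>G0. \<forall>j\<in>{1..s}. real N ^ j * nint_dist (real q0 * dcoef (Suc s) b h j) \<le> A"
    and N16: "16 / \<sigma>^2 \<le> real N"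
    and NB: "32 * ((2 * real Q1 / \<sigma>)^s * A + real s * real Q1 * Eseq (2 * real Q1 / \<sigma>) (32 / \<sigma>^2) A (real s * real Q1) s) / \<sigma>^2 \<le> real N"
    and rs: "r \<le> s"
  shows "\<exists>m::nat. 1 \<le> m \<and> real m \<le> (2 * real Q1 / \<sigma>)^r \<and>
     (\<forall>i. Suc s - r < i \<and> i \<le> Suc s \<longrightarrow> real N ^ i * nint_dist (real m * b i) \<le> Eseq (2 * real Q1 / \<sigma>) (32 / \<sigma>^2) A (real s * real Q1) r)"
  using rs
proof (induction r)
  case 0
  show ?case by (intro exI[of _ 1]) auto
next
  case (Suc r)
  define c where "c = 2 * real Q1 / \<sigma>"
  define w where "w = 32 / \<sigma>^2"
  define B where "B = real s * real Q1"
  have c1: "1 \<le> c" unfolding c_def using \<sigma>0 \<sigma>1 Q1 by (simp add: field_simps)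
  have w0: "0 \<le> w" unfolding w_def by simp
  have B0: "0 \<le> B" unfolding B_def by simp
  obtain m where m: "1 \<le> m" "real m \<le> c^r"
    "\<forall>i. Suc s - r < i \<and> i \<le> Suc s \<longrightarrow> real N ^ i * nint_dist (real m * b i) \<le> Eseq c w A B r"
    using Suc unfolding c_def w_def B_def by auto
  define E where "E = Eseq c w A B r"
  have E0: "0 \<le> E" unfolding E_def using c1 w0 A0 B0 by (intro Eseq_nonneg) auto
  define j where "j = s - r"
  have rs: "r < s" using Suc by simp
  have j1: "1 \<le> j" "j \<le> s" unfolding j_def using rs by auto
  define \<alpha> where "\<alpha> = real m * real q0 * b (Suc j)"
  define Bv where "Bv = c^r * A + real s * real Q1 * E"
  have Npos: "0 < real N" using N16 \<sigma>0 by (smt (verit) divide_pos_pos zero_less_power)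
  have est: "real N ^ j * nint_dist (\<alpha> * real h) \<le> Bv" if h: "h \<in> G0" for h
  proof -
    have hN: "h \<le> N" using h G0 by auto
    have Hh: "real N ^ j * nint_dist (real q0 * dcoef (Suc s) b h j) \<le> A" using H h j1 by auto
    have "real N ^ j * nint_dist (\<alpha> * real h) \<le> real m * A + real s * real Q1 * E"
      unfolding \<alpha>_def E_def using step_est[OF j_def rs hN q0(2) Hh m(3)] E0 unfolding E_def by simp
    also have "\<dots> \<le> Bv" unfolding Bv_def using m(2) A0 by (simp add: mult_right_mono)
    finally show ?thesis .
  qed
  define \<eta> where "\<eta> = Bv / real N ^ j"
  have N1: "1 \<le> real N"
  proof -
    have "\<sigma>^2 \<le> 1" using \<sigma>0 \<sigma>1 by (simp add: power_le_one)
    then have "1 \<le> 16 / \<sigma>^2" using \<sigma>0 by (simp add: field_simps)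
    then show ?thesis using N16 by linarith
  qed
  have "real N ^ 1 \<le> real N ^ j" by (rule power_increasing) (use j1 N1 in auto)
  then have NjN: "real N \<le> real N ^ j" by simp
  have Bv0: "0 \<le> Bv" unfolding Bv_def using c1 A0 E0 by simp
  have \<eta>0: "0 \<le> \<eta>" unfolding \<eta>_def using Bv0 by simp
  have Bvs: "Bv \<le> c^s * A + real s * real Q1 * Eseq c w A B s"
  proof -
    have "c^r \<le> c^s" using c1 rs by (simp add: power_increasing)
    moreover have "E \<le> Eseq c w A B s" unfolding E_def using c1 w0 A0 B0 rs by (intro Eseq_mono) auto
    ultimately show ?thesis unfolding Bv_def using A0 E0 c1 by (intro add_mono mult_mono mult_left_mono) auto
  qed
  have \<eta>s: "\<eta> \<le> \<sigma>^2 / 32"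
  proof -
    have "32 * Bv / \<sigma>^2 \<le> real N" using NB Bvs \<sigma>0 unfolding c_def w_def B_def by (smt (verit) divide_right_mono zero_le_power2)
    then have "Bv \<le> \<sigma>^2 / 32 * real N" using \<sigma>0 by (simp add: field_simps)
    also have "\<dots> \<le> \<sigma>^2 / 32 * real N ^ j" using NjN by (intro mult_left_mono) auto
    finally show ?thesis unfolding \<eta>_def using Npos by (simp add: divide_le_eq mult.commute)
  qed
  have hS: "\<forall>h\<in>G0. nint_dist (\<alpha> * real h) \<le> \<eta>"
  proof
    fix h assume "h \<in> G0"
    then have "real N ^ j * nint_dist (\<alpha> * real h) \<le> Bv" by (rule est)
    then show "nint_dist (\<alpha> * real h) \<le> \<eta>" unfolding \<eta>_def using Npos by (simp add: field_simps)
  qed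
  obtain q' where q': "1 \<le> q'" "real q' \<le> 2/\<sigma>" "nint_dist (real q' * \<alpha>) \<le> 32 * \<eta> / (\<sigma>^2 * real N)"
    using vino[OF \<sigma>0 G0(1) G0(2) N16 \<eta>0 \<eta>s hS] by blast
  define m' where "m' = q' * q0 * m"
  have m'1: "1 \<le> m'" unfolding m'_def using q' q0 m by simp
  have m'b: "real m' \<le> c^Suc r"
  proof -
    have "real m' = real q' * real q0 * real m" unfolding m'_def by simp
    also have "\<dots> \<le> (2/\<sigma>) * real Q1 * c^r" using q' q0 m \<sigma>0 by (intro mult_mono) auto
    also have "\<dots> = c^Suc r" unfolding c_def by simp
    finally show ?thesis .
  qed
  have ESuc: "Eseq c w A B (Suc r) = c * E + w * Bv" unfolding E_def Bv_def B_def by simp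
  have new: "real N ^ i * nint_dist (real m' * b i) \<le> Eseq c w A B (Suc r)"
    if i: "Suc s - Suc r < i" "i \<le> Suc s" for i
  proof (cases "i = Suc j")
    case True
    have "real m' * b i = real q' * \<alpha>" unfolding m'_def \<alpha>_def True by simp
    then have "real N ^ i * nint_dist (real m' * b i) = real N ^ Suc j * nint_dist (real q' * \<alpha>)"
      using True by simp
    also have "\<dots> \<le> real N ^ Suc j * (32 * \<eta> / (\<sigma>^2 * real N))"
      using q'(3) by (intro mult_left_mono) auto
    also have "\<dots> = w * Bv" unfolding \<eta>_def w_def using Npos by (simp add: field_simps)
    also have "\<dots> \<le> Eseq c w A B (Suc r)" unfolding ESuc using c1 E0 by simp
    finally show ?thesis .
  next
    case False
    then have ii: "Suc s - r < i" using i j_def rs by auto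
    have eqm: "real m' * b i = real (q' * q0) * (real m * b i)" unfolding m'_def by simp
    have "nint_dist (real m' * b i) \<le> real (q' * q0) * nint_dist (real m * b i)"
      unfolding eqm by (rule nd_mult_nat)
    then have "real N ^ i * nint_dist (real m' * b i) \<le> real (q' * q0) * (real N ^ i * nint_dist (real m * b i))"
      by (simp add: mult_left_mono mult.left_commute)
    also have "\<dots> \<le> real (q' * q0) * E" using m(3) ii i unfolding E_def by (intro mult_left_mono) auto
    also have "\<dots> \<le> c * E"
    proof (rule mult_right_mono[OF _ E0])
      have "real (q' * q0) = real q' * real q0" by simp
      also have "\<dots> \<le> (2/\<sigma>) * real Q1" using q' q0 \<sigma>0 by (intro mult_mono) auto
      finally show "real (q' * q0) \<le> c" unfolding c_def by simp
    qed
    also have "\<dots> \<le> Eseq c w A B (Suc r)" unfolding ESuc using w0 Bv0 by simp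
    finally show ?thesis .
  qed
  show ?case unfolding c_def[symmetric] w_def[symmetric] B_def[symmetric]
    using m'1 m'b new by blast
qed




definition goodT :: "nat \<Rightarrow> bool" where
  "goodT s \<longleftrightarrow> (\<forall>\<delta>>0. \<exists>(Q::nat) (C::real). 1 \<le> Q \<and>
     (\<forall>(b::nat\<Rightarrow>real) (N::nat). 1 \<le> N \<longrightarrow> \<delta> * real N \<le> norm (\<Sum>n\<in>{1..N}. ee (F s b (real n))) \<longrightarrow>
        (\<exists>q::nat. 1 \<le> q \<and> q \<le> Q \<and> (\<forall>j\<in>{1..s}. real N ^ j * nint_dist (real q * b j) \<le> C))))"

lemma goodT0: "goodT 0"
  unfolding goodT_def by (auto intro!: exI[of _ 1])

lemma goodT_Suc:
  assumes IH: "goodT s"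
  shows "goodT (Suc s)"
  unfolding goodT_def
proof (intro allI impI)
  fix \<delta> :: real assume \<delta>0: "0 < \<delta>"
  define \<delta>1 where "\<delta>1 = min \<delta> 1"
  have d10: "0 < \<delta>1" "\<delta>1 \<le> 1" "\<delta>1 \<le> \<delta>" using \<delta>0 unfolding \<delta>1_def by auto
  have "0 < \<delta>1^2 / 8" using d10 by simp
  then obtain Q1 C1 where Q1: "1 \<le> Q1" and IHQ: "\<forall>(b::nat\<Rightarrow>real) (N::nat). 1 \<le> N \<longrightarrow> \<delta>1^2/8 * real N \<le> norm (\<Sum>n\<in>{1..N}. ee (F s b (real n))) \<longrightarrow>
        (\<exists>q::nat. 1 \<le> q \<and> q \<le> Q1 \<and> (\<forall>j\<in>{1..s}. real N ^ j * nint_dist (real q * b j) \<le> C1))"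
    using IH unfolding goodT_def by blast
  define C1' where "C1' = max C1 0"
  define A where "A = C1' * (8 / \<delta>1^2)^s"
  define \<sigma> where "\<sigma> = \<delta>1^2 / (8 * real Q1)"
  define c where "c = 2 * real Q1 / \<sigma>"
  define w where "w = 32 / \<sigma>^2"
  define Bp where "Bp = real s * real Q1"
  define Es where "Es = Eseq c w A Bp s"
  define Bs where "Bs = c^s * A + real s * real Q1 * Es"
  define K where "K = nat (ceiling (8 * pi * real s * Es / \<delta>1)) + 1"
  define Mq where "Mq = nat (ceiling (c^s))"
  define Q where "Q = Mq * fact (Suc s)"
  define N0 where "N0 = max (2 / \<delta>1^2) (max (16 / \<sigma>^2) (max (32 * Bs / \<sigma>^2) (max (2 * real Q * real K) 1)))"
  define C where "C = max (16 * real Q * real K / \<delta>1) (max (fact (Suc s) * Es) (N0 ^ Suc s))"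
  have \<sigma>0: "0 < \<sigma>" unfolding \<sigma>_def using d10 Q1 by simp
  have \<sigma>1: "\<sigma> \<le> 1"
  proof -
    have "\<delta>1^2 \<le> 1" using d10 by (simp add: power_le_one)
    then show ?thesis unfolding \<sigma>_def using Q1 by (simp add: field_simps)
  qed
  have c1: "1 \<le> c" unfolding c_def using \<sigma>0 \<sigma>1 Q1 by (simp add: field_simps)
  have w0: "0 \<le> w" unfolding w_def by simp
  have A0: "0 \<le> A" unfolding A_def C1'_def using d10 by simp
  have Bp0: "0 \<le> Bp" unfolding Bp_def by simp
  have Es0: "0 \<le> Es" unfolding Es_def using c1 w0 A0 Bp0 by (intro Eseq_nonneg) auto
  have K1: "1 \<le> K" unfolding K_def by simp
  have KE: "2 * pi * real s * Es \<le> \<delta>1 * real K / 4"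
  proof -
    have "8 * pi * real s * Es / \<delta>1 \<le> real K" unfolding K_def by linarith
    then show ?thesis using d10 by (simp add: field_simps)
  qed
  have cs1: "1 \<le> c^s" using c1 by (rule one_le_power)
  have "(1::int) \<le> ceiling (c^s)" using cs1 le_of_int_ceiling[of "c^s"] by linarith
  then have "nat 1 \<le> nat (ceiling (c^s))" by (rule nat_mono)
  then have Mq1: "1 \<le> Mq" unfolding Mq_def by simp
  have Q1': "1 \<le> Q" unfolding Q_def using Mq1 by (simp add: Suc_le_eq)
  have N01: "1 \<le> N0" unfolding N0_def by simp
  show "\<exists>(Q::nat) (C::real). 1 \<le> Q \<and>
     (\<forall>(b::nat\<Rightarrow>real) (N::nat). 1 \<le> N \<longrightarrow> \<delta> * real N \<le> norm (\<Sum>n\<in>{1..N}. ee (F (Suc s) b (real n))) \<longrightarrow>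
        (\<exists>q::nat. 1 \<le> q \<and> q \<le> Q \<and> (\<forall>j\<in>{1..Suc s}. real N ^ j * nint_dist (real q * b j) \<le> C)))"
  proof (rule exI[of _ Q], rule exI[of _ C], intro conjI allI impI)
    show "1 \<le> Q" by (rule Q1')
    fix b :: "nat \<Rightarrow> real" and N :: nat
    assume N1: "1 \<le> N" and hyp: "\<delta> * real N \<le> norm (\<Sum>n\<in>{1..N}. ee (F (Suc s) b (real n)))"
    have hyp1: "\<delta>1 * real N \<le> norm (\<Sum>n\<in>{1..N}. ee (F (Suc s) b (real n)))"
      using hyp d10 by (smt (verit) mult_right_mono of_nat_0_le_iff)
    show "\<exists>q::nat. 1 \<le> q \<and> q \<le> Q \<and> (\<forall>j\<in>{1..Suc s}. real N ^ j * nint_dist (real q * b j) \<le> C)"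
    proof (cases "real N < N0")
      case True
      show ?thesis
      proof (intro exI[of _ 1] conjI ballI)
        show "1 \<le> (1::nat)" by simp
        show "1 \<le> Q" by (rule Q1')
        fix j assume j: "j \<in> {1..Suc s}"
        have "real N ^ j * nint_dist (real 1 * b j) \<le> real N ^ j * 1"
          using nd_le_half[of "b j"] by (intro mult_left_mono) auto
        also have "\<dots> \<le> N0 ^ j" using True by (simp add: power_mono)
        also have "\<dots> \<le> N0 ^ Suc s" using N01 j by (intro power_increasing) auto
        also have "\<dots> \<le> C" unfolding C_def by simp
        finally show "real N ^ j * nint_dist (real 1 * b j) \<le> C" .
      qed
    next
      case False
      then have NN0: "N0 \<le> real N" by simp
      have Nb1: "2 / \<delta>1^2 \<le> real N" using NN0 unfolding N0_def by linarith
      have Nb2: "16 / \<sigma>^2 \<le> real N" using NN0 unfolding N0_def by linarith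
      have Nb3: "32 * Bs / \<sigma>^2 \<le> real N" using NN0 unfolding N0_def by linarith
      have Nb4: "2 * real Q * real K \<le> real N" using NN0 unfolding N0_def by linarith
      obtain G where G: "G \<subseteq> {1..<N}" "\<delta>1^2 * real N / 8 \<le> real (card G)"
        "\<forall>h\<in>G. \<delta>1^2 * real N / 8 \<le> real (N - h) \<and>
        \<delta>1^2 / 8 * real (N - h) \<le> norm (\<Sum>m\<in>{1..N-h}. ee (F s (dcoef (Suc s) b h) (real m)))"
        using many_h[OF d10(1) Nb1 hyp1] by blast
      have exq: "\<exists>q::nat. 1 \<le> q \<and> q \<le> Q1 \<and> (\<forall>j\<in>{1..s}. real N ^ j * nint_dist (real q * dcoef (Suc s) b h j) \<le> A)"
        if h: "h \<in> G" for h
      proof -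
        have hN: "h < N" using G(1) h by auto
        have Nh: "1 \<le> N - h" using hN by simp
        obtain q where q: "1 \<le> q" "q \<le> Q1" "\<forall>j\<in>{1..s}. real (N-h) ^ j * nint_dist (real q * dcoef (Suc s) b h j) \<le> C1"
          using IHQ Nh G(3) h by blast
        have Nle: "real N \<le> (8 / \<delta>1^2) * real (N - h)"
        proof -
          have "\<delta>1^2 * real N / 8 \<le> real (N - h)" using G(3) h by blast
          then show ?thesis using d10 by (simp add: field_simps)
        qed
        have "real N ^ j * nint_dist (real q * dcoef (Suc s) b h j) \<le> A" if j: "j \<in> {1..s}" for j
        proof -
          define nd where "nd = nint_dist (real q * dcoef (Suc s) b h j)"
          have nd0: "0 \<le> nd" unfolding nd_def by (rule nd_nonneg)
          have k1: "1 \<le> 8 / \<delta>1^2"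
          proof -
            have "\<delta>1^2 \<le> 1" using d10 by (simp add: power_le_one)
            then show ?thesis using d10 by (simp add: field_simps)
          qed
          have "real N ^ j \<le> ((8 / \<delta>1^2) * real (N - h)) ^ j" using Nle by (intro power_mono) auto
          also have "\<dots> = (8 / \<delta>1^2) ^ j * real (N - h) ^ j" by (rule power_mult_distrib)
          also have "\<dots> \<le> (8 / \<delta>1^2) ^ s * real (N - h) ^ j" using k1 j by (intro mult_right_mono power_increasing) auto
          finally have Nj: "real N ^ j \<le> (8 / \<delta>1^2) ^ s * real (N - h) ^ j" .
          have "real N ^ j * nd \<le> (8 / \<delta>1^2) ^ s * (real (N - h) ^ j * nd)"
            using mult_right_mono[OF Nj nd0] by (simp add: mult.assoc)
          also have "\<dots> \<le> (8 / \<delta>1^2) ^ s * C1'"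
          proof (rule mult_left_mono)
            have "real (N - h) ^ j * nd \<le> C1" using q(3) j unfolding nd_def by blast
            then show "real (N - h) ^ j * nd \<le> C1'" unfolding C1'_def by linarith
          qed simp
          also have "\<dots> = A" unfolding A_def by simp
          finally show ?thesis unfolding nd_def .
        qed
        then show ?thesis using q by blast
      qed
      define qf where "qf h = (SOME q::nat. 1 \<le> q \<and> q \<le> Q1 \<and> (\<forall>j\<in>{1..s}. real N ^ j * nint_dist (real q * dcoef (Suc s) b h j) \<le> A))" for h
      have qf: "1 \<le> qf h \<and> qf h \<le> Q1 \<and> (\<forall>j\<in>{1..s}. real N ^ j * nint_dist (real (qf h) * dcoef (Suc s) b h j) \<le> A)"
        if "h \<in> G" for h
        unfolding qf_def by (rule someI_ex) (rule exq[OF that])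
      have finG: "finite G" using G(1) finite_subset by blast
      have Gne: "G \<noteq> {}"
      proof
        assume "G = {}"
        then have "\<delta>1^2 * real N / 8 \<le> 0" using G(2) by simp
        moreover have "0 < \<delta>1^2 * real N / 8" using d10 N1 by simp
        ultimately show False by simp
      qed
      obtain q0 where q0: "q0 \<in> {1..Q1}" "card G \<le> card (qf -` {q0} \<inter> G) * card {1..Q1}"
        using pigeonhole_card[of qf G "{1..Q1}"] qf finG Q1 by fastforce
      define G0 where "G0 = qf -` {q0} \<inter> G"
      have G0sub: "G0 \<subseteq> {1..N}" unfolding G0_def using G(1) by auto
      have cG0: "\<sigma> * real N \<le> real (card G0)"
      proof -
        have "real (card G) \<le> real (card G0) * real Q1" using q0(2) unfolding G0_def by (metis card_atLeastAtMost diff_Suc_1 of_nat_le_iff of_nat_mult)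
        then have "\<delta>1^2 * real N / 8 \<le> real (card G0) * real Q1" using G(2) by linarith
        then show ?thesis unfolding \<sigma>_def using Q1 by (simp add: field_simps)
      qed
      have H0: "\<forall>h\<in>G0. \<forall>j\<in>{1..s}. real N ^ j * nint_dist (real q0 * dcoef (Suc s) b h j) \<le> A"
        using qf unfolding G0_def by auto
      have NB: "32 * ((2 * real Q1 / \<sigma>)^s * A + real s * real Q1 * Eseq (2 * real Q1 / \<sigma>) (32 / \<sigma>^2) A (real s * real Q1) s) / \<sigma>^2 \<le> real N"
        using Nb3 unfolding Bs_def Es_def c_def w_def Bp_def .
      obtain m where m: "1 \<le> m" "real m \<le> c^s"
        "\<forall>i. Suc s - s < i \<and> i \<le> Suc s \<longrightarrow> real N ^ i * nint_dist (real m * b i) \<le> Es"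
        using descent[OF \<sigma>0 \<sigma>1 Q1 _ _ A0 G0sub cG0 H0 Nb2 NB order_refl] q0(1)
        unfolding c_def[symmetric] w_def[symmetric] Bp_def[symmetric] Es_def[symmetric] by auto
      have Eb: "\<forall>i\<in>{2..Suc s}. real N ^ i * nint_dist (real m * b i) \<le> Es" using m(3) by auto
      have mMq: "m \<le> Mq"
      proof -
        have "real m \<le> of_int (ceiling (c^s))" using m(2) le_of_int_ceiling[of "c^s"] by linarith
        then show ?thesis unfolding Mq_def by linarith
      qed
      define D where "D = m * fact (Suc s)"
      have DQ: "D \<le> Q" unfolding D_def Q_def using mMq by simp
      have D1: "1 \<le> D" unfolding D_def using m(1) by (simp add: Suc_le_eq)
      have NK: "2 * (m * fact (Suc s) * K) \<le> N"
      proof -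
        have "2 * (D * K) \<le> 2 * (Q * K)" using DQ by simp
        moreover have "real (2 * (Q * K)) \<le> real N" using Nb4 by simp
        ultimately show ?thesis unfolding D_def by linarith
      qed
      have lin: "real N * nint_dist (real D * b 1) \<le> 16 * real D * real K / \<delta>1"
        using lin_step[OF d10(1) m(1) hyp1 Eb K1 KE NK] unfolding D_def .
      show ?thesis
      proof (intro exI[of _ D] conjI ballI)
        show "1 \<le> D" by (rule D1)
        show "D \<le> Q" by (rule DQ)
        fix j assume j: "j \<in> {1..Suc s}"
        show "real N ^ j * nint_dist (real D * b j) \<le> C"
        proof (cases "j = 1")
          case True
          have "real N ^ j * nint_dist (real D * b j) \<le> 16 * real D * real K / \<delta>1" using lin True by simp
          also have "\<dots> \<le> 16 * real Q * real K / \<delta>1" using DQ d10 by (intro divide_right_mono mult_right_mono) auto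
          also have "\<dots> \<le> C" unfolding C_def by simp
          finally show ?thesis .
        next
          case False
          then have j2: "j \<in> {2..Suc s}" using j by auto
          have eqD: "real D * b j = real (fact (Suc s)) * (real m * b j)" unfolding D_def by simp
          have "nint_dist (real D * b j) \<le> real (fact (Suc s)) * nint_dist (real m * b j)"
            unfolding eqD by (rule nd_mult_nat)
          then have "real N ^ j * nint_dist (real D * b j) \<le> real (fact (Suc s)) * (real N ^ j * nint_dist (real m * b j))"
            by (simp add: mult_left_mono mult.left_commute)
          also have "\<dots> \<le> real (fact (Suc s)) * Es" using Eb j2 by (intro mult_left_mono) auto
          also have "\<dots> \<le> C" unfolding C_def using of_nat_fact[of "Suc s"]
            by (metis max.cobounded1 max.coboundedI2)
          finally show ?thesis .
        qed
      qed
    qed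
  qed
qed




lemma goodT_all: "goodT s"
  by (induction s) (auto intro: goodT0 goodT_Suc)

lemma cos_big: assumes "nint_dist x \<le> 1/10" shows "1/2 \<le> Re (ee x)"
proof -
  define y where "y = x - of_int (round x)"
  have ey: "ee x = ee y" unfolding y_def by (rule ee_round)
  have ny: "\<bar>y\<bar> \<le> 1/10" using assms by (simp add: y_def nint_dist_def)
  have c: "cos (2 * pi * y) = cos (2 * pi * \<bar>y\<bar>)"
    by (cases "y \<ge> 0") (auto simp: abs_if)
  have "cos (pi/3) \<le> cos (2 * pi * \<bar>y\<bar>)"
  proof (rule cos_monotone_0_pi_le)
    show "0 \<le> 2 * pi * \<bar>y\<bar>" by simp
    show "2 * pi * \<bar>y\<bar> \<le> pi / 3" using ny pi_gt_zero by (simp add: field_simps)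
    show "pi / 3 \<le> pi" using pi_gt_zero by simp
  qed
  then show ?thesis using ey c by (simp add: ee_def cos_60)
qed

lemma sum_lower:
  fixes f :: "nat \<Rightarrow> real"
  assumes "\<forall>n\<in>{1..N}. nint_dist (f n - f 1) \<le> 1/10"
  shows "1/2 * real N \<le> norm (\<Sum>n\<in>{1..N}. ee (f n))"
proof -
  have eq: "(\<Sum>n\<in>{1..N}. ee (f n)) = ee (f 1) * (\<Sum>n\<in>{1..N}. ee (f n - f 1))"
    by (simp add: sum_distrib_left ee_add[symmetric])
  have "1/2 * real N = (\<Sum>n\<in>{1..N}. (1/2::real))" by simp
  also have "\<dots> \<le> (\<Sum>n\<in>{1..N}. Re (ee (f n - f 1)))" using assms cos_big by (intro sum_mono) auto
  also have "\<dots> = Re (\<Sum>n\<in>{1..N}. ee (f n - f 1))" by simp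
  also have "\<dots> \<le> norm (\<Sum>n\<in>{1..N}. ee (f n - f 1))" by (rule complex_Re_le_cmod)
  also have "\<dots> = norm (\<Sum>n\<in>{1..N}. ee (f n))" unfolding eq by (simp add: norm_mult)
  finally show ?thesis .
qed

theorem lemma2p3:
  fixes s :: nat
  assumes "s \<ge> 1"
  shows "\<exists>(Q::nat) (C::real). Q \<ge> 1 \<and> C \<ge> 1 \<and>
    (\<forall>(a :: nat \<Rightarrow> real) (N :: nat). N \<ge> 1 \<longrightarrow>
       diam_on (int_range N) (poly_phase s a) \<le> 1/10 \<longrightarrow>
       (\<exists>q::nat. 1 \<le> q \<and> q \<le> Q \<and>
          smooth_norm N s (\<lambda>j. real q * a j) \<le> C))"
proof -
  obtain Q0 C0 where Q0: "1 \<le> Q0" and TQ: "\<forall>(b::nat\<Rightarrow>real) (N::nat). 1 \<le> N \<longrightarrow> 1/2 * real N \<le> norm (\<Sum>n\<in>{1..N}. ee (F s b (real n))) \<longrightarrow>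
        (\<exists>q::nat. 1 \<le> q \<and> q \<le> Q0 \<and> (\<forall>j\<in>{1..s}. real N ^ j * nint_dist (real q * b j) \<le> C0))"
  proof -
    have g: "\<forall>\<delta>>0. \<exists>(Q::nat) (C::real). 1 \<le> Q \<and>
     (\<forall>(b::nat\<Rightarrow>real) (N::nat). 1 \<le> N \<longrightarrow> \<delta> * real N \<le> norm (\<Sum>n\<in>{1..N}. ee (F s b (real n))) \<longrightarrow>
        (\<exists>q::nat. 1 \<le> q \<and> q \<le> Q \<and> (\<forall>j\<in>{1..s}. real N ^ j * nint_dist (real q * b j) \<le> C)))"
      using goodT_all[of s] unfolding goodT_def .
    have h: "(0::real) < 1/2" by simp
    show ?thesis using g[rule_format, OF h] that by blast
  qed
  show ?thesis
  proof (rule exI[of _ Q0], rule exI[of _ "max C0 1"], intro conjI allI impI)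
    show "1 \<le> Q0" by (rule Q0)
    show "1 \<le> max C0 1" by simp
    fix a :: "nat \<Rightarrow> real" and N :: nat
    assume N1: "1 \<le> N" and diam: "diam_on (int_range N) (poly_phase s a) \<le> 1/10"
    define b where "b = binom_coeffs s a"
    have pb: "\<forall>x. poly_phase s a x = F s b x" unfolding b_def by (rule binom_coeffs_F)
    have fin: "finite (int_range N \<times> int_range N)" unfolding int_range_def by simp
    have close: "\<forall>n\<in>{1..N}. nint_dist (F s b (real n) - F s b (real 1)) \<le> 1/10"
    proof
      fix n assume n: "n \<in> {1..N}"
      have "(real n, real 1) \<in> int_range N \<times> int_range N" unfolding int_range_def using n N1 by auto
      then have "nint_dist (poly_phase s a (fst (real n, real 1)) - poly_phase s a (snd (real n, real 1)))
          \<le> diam_on (int_range N) (poly_phase s a)"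
        unfolding diam_on_def using fin by (intro cSUP_upper) (auto intro: bdd_above_finite finite_imageI)
      then show "nint_dist (F s b (real n) - F s b (real 1)) \<le> 1/10" using diam pb by simp
    qed
    have "1/2 * real N \<le> norm (\<Sum>n\<in>{1..N}. ee (F s b (real n)))"
      using sum_lower[of N "\<lambda>n. F s b (real n)"] close by simp
    then obtain q where q: "1 \<le> q" "q \<le> Q0" "\<forall>j\<in>{1..s}. real N ^ j * nint_dist (real q * b j) \<le> C0"
      using TQ N1 by blast
    have "smooth_norm N s (\<lambda>j. real q * a j) = (SUP j\<in>{1..s}. real N ^ j * nint_dist (real q * b j))"
      unfolding smooth_norm_def binom_coeffs_scale b_def ..
    also have "\<dots> \<le> max C0 1"
    proof (rule cSUP_least)
      show "{1..s} \<noteq> {}" using assms by simp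
      fix j assume "j \<in> {1..s}"
      then have "real N ^ j * nint_dist (real q * b j) \<le> C0" using q(3) by blast
      then show "real N ^ j * nint_dist (real q * b j) \<le> max C0 1" by linarith
    qed
    finally show "\<exists>q::nat. 1 \<le> q \<and> q \<le> Q0 \<and> smooth_norm N s (\<lambda>j. real q * a j) \<le> max C0 1"
      using q by blast
  qed
qed


end
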